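(* Let $K=K(p,q)$ be a 2-bridge knot. For any $n\in\mathbb{Z},$ the fundamental group $\pi_1(S^3_{n}(K))$ admits a non-trivial $SL(2, \mathbb{R})$ representation if the system of equations $$A_{p,q}(t, u) = (t - t^{-1}) B_{p,q}(t, u),\qquad t^{n-2\sigma}((t-t^{-1})^2-u)\left(B_{p,q}(t, u)\right)^2=1$$ has a solution $(t, u)\in\mathbb{R}^2$ with $t\notin\{-1, 0, 1\}$ or a solution with $t=e^{i\theta}, t\neq\pm1$ and $u\in(-\infty, -4\sin^2(\theta))\cup(0,\infty),$ or if $n$ is odd and the system of equations $$A_{p,q}(-1, u) = 0,\qquad -(n-2\sigma)uB_{p,q}(-1, u) = 2D_{p,q}(-1, u)$$ has a solution $u\in\mathbb{R}.$ Moreover, if $n=\pm1,$ then the existence of a solution of one of the kinds just listed (a solution of the first system with $(t,u)\in\mathbb{R}^2$, $t\notin\{-1,0,1\}$, or with $t=e^{i\theta}$, $t\neq\pm1$, $u\in(-\infty, -4\sin^2(\theta))\cup(0,\infty)$; or, $n$ being odd, a real solution $u$ of the second system) is a necessary and sufficient condition for $\pi_1(S^3_{n}(K))$ to admit a non-trivial $SL(2, \mathbb{R})$ representation.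
   Context: A 2-bridge knot is written $K(p,q)$ with $p,q$ odd integers and $q\in(-p,p)$. For $1\le i\le p$ let $e_i = (-1)^{\lfloor iq/p\rfloor}$ and $\sigma = \sum_{i=1}^{p-1} e_i$. For $t,u\in\mathbb{C}$, $t\neq 0$, let $C = \begin{pmatrix} t & 1 \\ 0 & t^{-1}\end{pmatrix}$, $D = \begin{pmatrix} t & 0 \\ -u & t^{-1}\end{pmatrix}$, and $W = C^{e_1}D^{e_2}\cdots C^{e_{p-2}}D^{e_{p-1}} = \begin{pmatrix} a & b \\ c & d\end{pmatrix}$. Then $A_{p,q}(t,u)$, $B_{p,q}(t,u)$, $D_{p,q}(t,u)\in\mathbb{Z}[t,t^{-1},u]$ denote the entries $a$, $b$, $d$ of $W$ respectively. $S^3_n(K)$ denotes $n$-framed Dehn surgery on $K$. The knot group has presentation $\langle x,y\mid wx=yw\rangle$ with $w=x^{e_1}y^{e_2}\cdots x^{e_{p-2}}y^{e_{p-1}}$, meridian $x$, and the representations considered send $x\mapsto C$, $y\mapsto D$. *)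

theory Defs
  imports Complex_Main
begin

datatype 'a m2 = M2 'a 'a 'a 'a

fun m2mul :: "'a::comm_ring_1 m2 \<Rightarrow> 'a m2 \<Rightarrow> 'a m2" where
  "m2mul (M2 a b c d) (M2 a' b' c' d') =
     M2 (a*a' + b*c') (a*b' + b*d') (c*a' + d*c') (c*b' + d*d')"

definition m2id :: "'a::comm_ring_1 m2" where "m2id = M2 1 0 0 1"

fun m2det :: "'a::comm_ring_1 m2 \<Rightarrow> 'a" where
  "m2det (M2 a b c d) = a*d - b*c"

text \<open>Adjugate; equals the inverse for matrices of determinant 1.\<close>
fun m2adj :: "'a::comm_ring_1 m2 \<Rightarrow> 'a m2" where
  "m2adj (M2 a b c d) = M2 d (-b) (-c) a"

fun m2pow :: "'a::comm_ring_1 m2 \<Rightarrow> nat \<Rightarrow> 'a m2" where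
  "m2pow M 0 = m2id"
| "m2pow M (Suc k) = m2mul (m2pow M k) M"

definition m2zpow :: "'a::comm_ring_1 m2 \<Rightarrow> int \<Rightarrow> 'a m2" where
  "m2zpow M k = (if 0 \<le> k then m2pow M (nat k) else m2pow (m2adj M) (nat (-k)))"

fun m2_a :: "'a m2 \<Rightarrow> 'a" where "m2_a (M2 a b c d) = a"
fun m2_b :: "'a m2 \<Rightarrow> 'a" where "m2_b (M2 a b c d) = b"
fun m2_d :: "'a m2 \<Rightarrow> 'a" where "m2_d (M2 a b c d) = d"

text \<open>e_i = (-1)^floor(i q / p); for p > 0, integer div is floor division.\<close>
definition eps :: "int \<Rightarrow> int \<Rightarrow> int \<Rightarrow> int" where
  "eps p q i = (if even ((i * q) div p) then 1 else -1)"

definition sigma :: "int \<Rightarrow> int \<Rightarrow> int" where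
  "sigma p q = (\<Sum>i\<in>{1..p-1}. eps p q i)"

definition wfactor :: "int \<Rightarrow> int \<Rightarrow> 'a::comm_ring_1 m2 \<Rightarrow> 'a m2 \<Rightarrow> int \<Rightarrow> 'a m2" where
  "wfactor p q X Y i = m2zpow (if odd i then X else Y) (eps p q i)"

text \<open>w = x^{e_1} y^{e_2} ... x^{e_{p-2}} y^{e_{p-1}} evaluated at (X,Y).\<close>
definition wordW :: "int \<Rightarrow> int \<Rightarrow> 'a::comm_ring_1 m2 \<Rightarrow> 'a m2 \<Rightarrow> 'a m2" where
  "wordW p q X Y = foldl (\<lambda>M i. m2mul M (wfactor p q X Y i)) m2id [1..p-1]"

definition wordWrev :: "int \<Rightarrow> int \<Rightarrow> 'a::comm_ring_1 m2 \<Rightarrow> 'a m2 \<Rightarrow> 'a m2" where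
  "wordWrev p q X Y = foldl (\<lambda>M i. m2mul M (wfactor p q X Y i)) m2id (rev [1..p-1])"

definition matC :: "'a::field \<Rightarrow> 'a m2" where "matC t = M2 t 1 0 (inverse t)"
definition matD :: "'a::field \<Rightarrow> 'a \<Rightarrow> 'a m2" where "matD t u = M2 t 0 (-u) (inverse t)"

definition Apq :: "int \<Rightarrow> int \<Rightarrow> 'a::field \<Rightarrow> 'a \<Rightarrow> 'a" where
  "Apq p q t u = m2_a (wordW p q (matC t) (matD t u))"
definition Bpq :: "int \<Rightarrow> int \<Rightarrow> 'a::field \<Rightarrow> 'a \<Rightarrow> 'a" where
  "Bpq p q t u = m2_b (wordW p q (matC t) (matD t u))"
definition Dpq :: "int \<Rightarrow> int \<Rightarrow> 'a::field \<Rightarrow> 'a \<Rightarrow> 'a" where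
  "Dpq p q t u = m2_d (wordW p q (matC t) (matD t u))"

definition two_bridge :: "int \<Rightarrow> int \<Rightarrow> bool" where
  "two_bridge p q \<longleftrightarrow> 0 < p \<and> odd p \<and> odd q \<and> -p < q \<and> q < p \<and> coprime p q"

text \<open>pi_1(S^3_n(K(p,q))) = < x, y | w x = y w,  (w backwards) w x^{n - 2 sigma} = 1 >,
  where (w backwards) w x^{-2 sigma} is the longitude. A homomorphism to SL(2,R)
  is determined by the images X, Y of the generators satisfying the relations.\<close>
definition surgery_rep :: "int \<Rightarrow> int \<Rightarrow> int \<Rightarrow> real m2 \<Rightarrow> real m2 \<Rightarrow> bool" where
  "surgery_rep p q n X Y \<longleftrightarrow>
     m2det X = 1 \<and> m2det Y = 1 \<and>
     m2mul (wordW p q X Y) X = m2mul Y (wordW p q X Y) \<and>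
     m2mul (m2mul (wordWrev p q X Y) (wordW p q X Y)) (m2zpow X (n - 2 * sigma p q)) = m2id"

definition has_nontrivial_SL2R_rep :: "int \<Rightarrow> int \<Rightarrow> int \<Rightarrow> bool" where
  "has_nontrivial_SL2R_rep p q n \<longleftrightarrow>
     (\<exists>X Y. surgery_rep p q n X Y \<and> (X \<noteq> m2id \<or> Y \<noteq> m2id))"

definition real_sol :: "int \<Rightarrow> int \<Rightarrow> int \<Rightarrow> bool" where
  "real_sol p q n \<longleftrightarrow> (\<exists>t u :: real. t \<notin> {-1, 0, 1} \<and>
     Apq p q t u = (t - inverse t) * Bpq p q t u \<and>
     t powi (n - 2 * sigma p q) * ((t - inverse t)^2 - u) * (Bpq p q t u)^2 = 1)"

definition circle_sol :: "int \<Rightarrow> int \<Rightarrow> int \<Rightarrow> bool" where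
  "circle_sol p q n \<longleftrightarrow> (\<exists>(\<theta>::real) (u::real). let t = cis \<theta>; v = complex_of_real u in
     t \<noteq> 1 \<and> t \<noteq> -1 \<and> (u < -4 * (sin \<theta>)^2 \<or> 0 < u) \<and>
     Apq p q t v = (t - inverse t) * Bpq p q t v \<and>
     t powi (n - 2 * sigma p q) * ((t - inverse t)^2 - v) * (Bpq p q t v)^2 = 1)"

definition minus_one_sol :: "int \<Rightarrow> int \<Rightarrow> int \<Rightarrow> bool" where
  "minus_one_sol p q n \<longleftrightarrow> odd n \<and> (\<exists>u::real.
     Apq p q (-1) u = 0 \<and>
     - of_int (n - 2 * sigma p q) * u * Bpq p q (-1) u = 2 * Dpq p q (-1) u)"

end

theory Submission
  imports Defs
begin


lemma m2mul_assoc: "m2mul (m2mul A B) C = m2mul A (m2mul B C)"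
  by (cases A; cases B; cases C) (simp add: algebra_simps)

lemma m2mul_id_left[simp]: "m2mul m2id A = A"
  by (cases A) (simp add: m2id_def)

lemma m2mul_id_right[simp]: "m2mul A m2id = A"
  by (cases A) (simp add: m2id_def)

fun m2tr :: "'a::comm_ring_1 m2 \<Rightarrow> 'a" where
  "m2tr (M2 a b c d) = a + d"

fun m2T :: "'a m2 \<Rightarrow> 'a m2" where
  "m2T (M2 a b c d) = M2 a c b d"

fun m2_c :: "'a m2 \<Rightarrow> 'a" where "m2_c (M2 a b c d) = c"

lemma m2_eq_iff: "A = B \<longleftrightarrow> m2_a A = m2_a B \<and> m2_b A = m2_b B \<and> m2_c A = m2_c B \<and> m2_d A = m2_d B"
  by (cases A; cases B) auto

definition prodL :: "('b \<Rightarrow> 'a::comm_ring_1 m2) \<Rightarrow> 'b list \<Rightarrow> 'a m2" where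
  "prodL f xs = foldl (\<lambda>M i. m2mul M (f i)) m2id xs"

lemma foldl_prodL: "foldl (\<lambda>M i. m2mul M (f i)) A xs = m2mul A (prodL f xs)"
proof (induction xs arbitrary: A)
  case Nil then show ?case by (simp add: prodL_def)
next
  case (Cons x xs)
  have "foldl (\<lambda>M i. m2mul M (f i)) A (x # xs) = m2mul (m2mul A (f x)) (prodL f xs)"
    using Cons by simp
  moreover have "prodL f (x # xs) = m2mul (f x) (prodL f xs)"
    using Cons[of "f x"] by (simp add: prodL_def)
  ultimately show ?case by (simp add: m2mul_assoc)
qed

lemma prodL_Nil[simp]: "prodL f [] = m2id" by (simp add: prodL_def)
lemma prodL_Cons: "prodL f (x # xs) = m2mul (f x) (prodL f xs)"
proof -
  have "prodL f (x # xs) = foldl (\<lambda>M i. m2mul M (f i)) (f x) xs" by (simp add: prodL_def)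
  then show ?thesis by (simp only: foldl_prodL)
qed
lemma prodL_append: "prodL f (xs @ ys) = m2mul (prodL f xs) (prodL f ys)"
proof -
  have "prodL f (xs @ ys) = foldl (\<lambda>M i. m2mul M (f i)) (prodL f xs) ys" by (simp add: prodL_def)
  then show ?thesis by (simp only: foldl_prodL)
qed

lemma wordW_prodL: "wordW p q X Y = prodL (wfactor p q X Y) [1..p-1]"
  unfolding wordW_def prodL_def ..
lemma wordWrev_prodL: "wordWrev p q X Y = prodL (wfactor p q X Y) (rev [1..p-1])"
  unfolding wordWrev_def prodL_def ..

definition intw :: "'a::comm_ring_1 m2 \<Rightarrow> 'a m2 \<Rightarrow> 'a m2 \<Rightarrow> bool" where
  "intw G X X' \<longleftrightarrow> m2mul G X = m2mul X' G"

lemma intw_mul: "intw G A A' \<Longrightarrow> intw G B B' \<Longrightarrow> intw G (m2mul A B) (m2mul A' B')"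
  unfolding intw_def
proof -
  assume h1: "m2mul G A = m2mul A' G" and h2: "m2mul G B = m2mul B' G"
  have "m2mul G (m2mul A B) = m2mul (m2mul G A) B" by (simp add: m2mul_assoc)
  also have "\<dots> = m2mul A' (m2mul G B)" by (simp add: h1 m2mul_assoc)
  also have "\<dots> = m2mul (m2mul A' B') G" by (simp add: h2 m2mul_assoc)
  finally show "m2mul G (m2mul A B) = m2mul (m2mul A' B') G" .
qed

lemma intw_id: "intw G m2id m2id" unfolding intw_def by simp

fun m2add :: "'a::comm_ring_1 m2 \<Rightarrow> 'a m2 \<Rightarrow> 'a m2" where
  "m2add (M2 a b c d) (M2 a' b' c' d') = M2 (a+a') (b+b') (c+c') (d+d')"
fun m2smul :: "'a::comm_ring_1 \<Rightarrow> 'a m2 \<Rightarrow> 'a m2" where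
  "m2smul k (M2 a b c d) = M2 (k*a) (k*b) (k*c) (k*d)"

lemma adj_eq: "m2adj X = m2add (m2smul (m2tr X) m2id) (m2smul (-1) X)"
  by (cases X) (simp add: m2id_def)
lemma mul_add_right: "m2mul G (m2add A B) = m2add (m2mul G A) (m2mul G B)"
  by (cases G; cases A; cases B) (simp add: algebra_simps)
lemma mul_add_left: "m2mul (m2add A B) G = m2add (m2mul A G) (m2mul B G)"
  by (cases G; cases A; cases B) (simp add: algebra_simps)
lemma mul_smul_right: "m2mul G (m2smul k A) = m2smul k (m2mul G A)"
  by (cases G; cases A) (simp add: algebra_simps)
lemma mul_smul_left: "m2mul (m2smul k A) G = m2smul k (m2mul A G)"
  by (cases G; cases A) (simp add: algebra_simps)

lemma intw_adj: "intw G X X' \<Longrightarrow> m2tr X = m2tr X' \<Longrightarrow> intw G (m2adj X) (m2adj X')"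
  unfolding intw_def adj_eq by (simp add: mul_add_right mul_add_left mul_smul_right mul_smul_left)

lemma intw_pow: "intw G X X' \<Longrightarrow> intw G (m2pow X m) (m2pow X' m)"
  by (induction m) (simp_all add: intw_id intw_mul)

lemma intw_zpow: "intw G X X' \<Longrightarrow> m2tr X = m2tr X' \<Longrightarrow> intw G (m2zpow X k) (m2zpow X' k)"
  unfolding m2zpow_def by (simp add: intw_pow intw_adj)

lemma intw_prodL: "(\<And>i. i \<in> set xs \<Longrightarrow> intw G (f i) (f' i)) \<Longrightarrow> intw G (prodL f xs) (prodL f' xs)"
  by (induction xs) (simp_all add: prodL_Cons intw_id intw_mul)

lemma intw_wfactor: "intw G X X' \<Longrightarrow> intw G Y Y' \<Longrightarrow> m2tr X = m2tr X' \<Longrightarrow> m2tr Y = m2tr Y'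
  \<Longrightarrow> intw G (wfactor p q X Y i) (wfactor p q X' Y' i)"
  unfolding wfactor_def by (simp add: intw_zpow)

lemma intw_wordW: "intw G X X' \<Longrightarrow> intw G Y Y' \<Longrightarrow> m2tr X = m2tr X' \<Longrightarrow> m2tr Y = m2tr Y'
  \<Longrightarrow> intw G (wordW p q X Y) (wordW p q X' Y')"
  unfolding wordW_prodL by (intro intw_prodL intw_wfactor)

lemma intw_wordWrev: "intw G X X' \<Longrightarrow> intw G Y Y' \<Longrightarrow> m2tr X = m2tr X' \<Longrightarrow> m2tr Y = m2tr Y'
  \<Longrightarrow> intw G (wordWrev p q X Y) (wordWrev p q X' Y')"
  unfolding wordWrev_prodL by (intro intw_prodL intw_wfactor)

lemma m2T_mul: "m2T (m2mul A B) = m2mul (m2T B) (m2T A)"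
  by (cases A; cases B) (simp add: algebra_simps)
lemma m2T_id[simp]: "m2T m2id = m2id" by (simp add: m2id_def)
lemma m2T_adj: "m2T (m2adj X) = m2adj (m2T X)" by (cases X) simp
lemma m2T_tr: "m2tr (m2T X) = m2tr X" by (cases X) simp

lemma m2pow_comm: "m2mul (m2pow X m) X = m2mul X (m2pow X m)"
  by (induction m) (simp_all add: m2mul_assoc)

lemma m2T_pow: "m2T (m2pow X m) = m2pow (m2T X) m"
  by (induction m) (simp_all add: m2T_mul m2pow_comm)

lemma m2T_zpow: "m2T (m2zpow X k) = m2zpow (m2T X) k"
  unfolding m2zpow_def by (simp add: m2T_pow m2T_adj)

lemma m2T_prodL: "m2T (prodL f xs) = prodL (\<lambda>i. m2T (f i)) (rev xs)"
  by (induction xs) (simp_all add: prodL_Cons prodL_append m2T_mul)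

abbreviation mapC :: "real m2 \<Rightarrow> complex m2" where "mapC \<equiv> map_m2 complex_of_real"

lemma mapC_mul: "mapC (m2mul A B) = m2mul (mapC A) (mapC B)"
  by (cases A; cases B) simp
lemma mapC_id[simp]: "mapC m2id = m2id" by (simp add: m2id_def)
lemma mapC_adj: "mapC (m2adj A) = m2adj (mapC A)" by (cases A) simp
lemma mapC_pow: "mapC (m2pow A m) = m2pow (mapC A) m"
  by (induction m) (simp_all add: mapC_mul)
lemma mapC_zpow: "mapC (m2zpow A k) = m2zpow (mapC A) k"
  unfolding m2zpow_def by (simp add: mapC_pow mapC_adj)
lemma mapC_prodL: "mapC (prodL f xs) = prodL (\<lambda>i. mapC (f i)) xs"
  by (induction xs) (simp_all add: prodL_Cons mapC_mul)
lemma mapC_wfactor: "mapC (wfactor p q X Y i) = wfactor p q (mapC X) (mapC Y) i"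
  unfolding wfactor_def by (simp add: mapC_zpow)
lemma mapC_wordW: "mapC (wordW p q X Y) = wordW p q (mapC X) (mapC Y)"
  unfolding wordW_prodL by (simp add: mapC_prodL mapC_wfactor)
lemma mapC_wordWrev: "mapC (wordWrev p q X Y) = wordWrev p q (mapC X) (mapC Y)"
  unfolding wordWrev_prodL by (simp add: mapC_prodL mapC_wfactor)
lemma mapC_det: "m2det (mapC A) = complex_of_real (m2det A)" by (cases A) simp
lemma mapC_tr: "m2tr (mapC A) = complex_of_real (m2tr A)" by (cases A) simp
lemma mapC_inj: "mapC A = mapC B \<Longrightarrow> A = B"
  by (cases A; cases B) simp
lemma mapC_matC: "mapC (matC t) = matC (complex_of_real t)"
  by (simp add: matC_def of_real_inverse)
lemma mapC_matD: "mapC (matD t u) = matD (complex_of_real t) (complex_of_real u)"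
  by (simp add: matD_def of_real_inverse)


lemma eps_sym:
  assumes tb: "two_bridge p q" and i: "1 \<le> i" "i \<le> p - 1"
  shows "eps p q (p - i) = eps p q i"
proof -
  from tb have p: "0 < p" "odd q" "coprime p q" unfolding two_bridge_def by auto
  have nd: "(i * q) mod p \<noteq> 0"
  proof
    assume "(i * q) mod p = 0"
    then have "p dvd i * q" by (simp add: mod_eq_0_iff_dvd)
    then have "p dvd i" using p(3) by (metis coprime_dvd_mult_left_iff)
    then show False using i zdvd_imp_le by fastforce
  qed
  have "(p - i) * q div p = (q * p + (- (i * q))) div p" by (simp add: algebra_simps)
  also have "\<dots> = q + (- (i * q)) div p" using p(1) by (metis add.commute div_mult_self1 less_irrefl)
  also have "\<dots> = q - (i * q) div p - 1" using nd p(1) by (simp add: zdiv_zminus1_eq_if)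
  finally have "(p - i) * q div p = q - (i * q) div p - 1" .
  then have "even ((p - i) * q div p) \<longleftrightarrow> even ((i * q) div p)" using p(2) by simp
  then show ?thesis unfolding eps_def by simp
qed

lemma prodL_map: "prodL f xs = prodL id (map f xs)"
  by (induction xs) (simp_all add: prodL_Cons)

lemma wordWrev_swap:
  assumes tb: "two_bridge p q"
  shows "wordWrev p q X Y = wordW p q Y X"
proof -
  from tb have p: "0 < p" "odd p" unfolding two_bridge_def by auto
  have "map (wfactor p q X Y) (rev [1..p-1]) = map (wfactor p q Y X) [1..p-1]"
  proof (rule nth_equalityI)
    fix k assume "k < length (map (wfactor p q X Y) (rev [1..p-1]))"
    then have k: "int k < p - 1" by simp
    have "rev [1..p-1] ! k = [1..p-1] ! (nat (p - 1) - Suc k)"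
      using k by (simp add: rev_nth)
    also have "\<dots> = p - (1 + int k)" using k by simp
    finally have r: "rev [1..p-1] ! k = p - (1 + int k)" .
    have e: "eps p q (p - (1 + int k)) = eps p q (1 + int k)"
      using k by (intro eps_sym[OF tb]) auto
    have o: "odd (p - (1 + int k)) \<longleftrightarrow> even (1 + int k)" using p(2) by simp
    show "map (wfactor p q X Y) (rev [1..p-1]) ! k = map (wfactor p q Y X) [1..p-1] ! k"
      using k r e o by (simp add: wfactor_def)
  qed simp
  then show ?thesis unfolding wordWrev_prodL wordW_prodL by (metis prodL_map)
qed


lemma m2pow_tri: "\<exists>z. m2pow (M2 a b 0 d) m = M2 (a^m) z 0 (d^m) \<and> (a - d) * z = b * (a^m - d^m)"
proof (induction m)
  case 0 then show ?case by (simp add: m2id_def)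
next
  case (Suc m)
  then obtain z where z: "m2pow (M2 a b 0 d) m = M2 (a^m) z 0 (d^m)" "(a - d) * z = b * (a^m - d^m)" by blast
  have e: "(a - d) * (a^m * b + z * d) = (a-d)*a^m*b + d*((a-d)*z)" by (simp add: algebra_simps)
  have "(a - d) * (a^m * b + z * d) = b * (a^Suc m - d^Suc m)"
    unfolding e z(2) by (simp add: algebra_simps)
  moreover have "m2pow (M2 a b 0 d) (Suc m) = M2 (a^Suc m) (a^m * b + z * d) 0 (d^Suc m)"
    by (simp add: z algebra_simps)
  ultimately show ?case by blast
qed

lemma m2pow_tri_eq: "m2pow (M2 a b 0 a) m = M2 (a^m) (of_nat m * a^(m-1) * b) 0 (a^m)"
proof (induction m)
  case 0 then show ?case by (simp add: m2id_def)
next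
  case (Suc m)
  then show ?case by (cases m) (simp_all add: algebra_simps)
qed

lemma powi_neg_nat: "(x::'a::field) powi (- int m) = inverse x ^ m"
  by (simp add: power_int_minus power_inverse)

lemma zpow_C:
  fixes t :: "'a::field"
  assumes "t \<noteq> 0"
  shows "\<exists>z. m2zpow (matC t) k = M2 (t powi k) z 0 (inverse t powi k) \<and> (t - inverse t) * z = t powi k - inverse t powi k"
proof (cases "0 \<le> k")
  case True
  then obtain m where k: "k = int m" by (metis nonneg_eq_int)
  obtain z where z: "m2pow (M2 t 1 0 (inverse t)) m = M2 (t^m) z 0 ((inverse t)^m)"
     "(t - inverse t) * z = 1 * (t^m - (inverse t)^m)" using m2pow_tri by blast
  show ?thesis using z unfolding m2zpow_def matC_def k by auto
next
  case False
  then obtain m where k: "k = - int m" by (metis nle_le nonpos_int_cases)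
  obtain z where z: "m2pow (M2 (inverse t) (-1) 0 t) m = M2 ((inverse t)^m) z 0 (t^m)"
     "(inverse t - t) * z = (-1) * ((inverse t)^m - t^m)" using m2pow_tri by blast
  have "(t - inverse t) * z = inverse t ^ m - t ^ m" using z(2) by (simp add: algebra_simps)
  then show ?thesis using z False unfolding m2zpow_def matC_def k by (auto simp: powi_neg_nat)
qed

lemma zpow_C1: "m2zpow (matC (1::'a::field)) k = M2 1 (of_int k) 0 1"
proof (cases "0 \<le> k")
  case True
  then obtain m where k: "k = int m" by (metis nonneg_eq_int)
  show ?thesis unfolding m2zpow_def matC_def k using m2pow_tri_eq[of "1::'a" 1 m] by simp
next
  case False
  then obtain m where k: "k = - int m" by (metis nle_le nonpos_int_cases)
  show ?thesis using False unfolding m2zpow_def matC_def k using m2pow_tri_eq[of "1::'a" "-1" m] by simp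
qed

lemma zpow_Cm1: "m2zpow (matC (-1::'a::field)) k = M2 ((-1) powi k) (- of_int k * (-1) powi k) 0 ((-1) powi k)"
proof (cases "0 \<le> k")
  case True
  then obtain m where k: "k = int m" by (metis nonneg_eq_int)
  have "of_nat m * (-1::'a) ^ (m - 1) = - of_nat m * (-1) ^ m"
    by (cases m) (simp_all add: algebra_simps)
  then show ?thesis unfolding m2zpow_def matC_def k using m2pow_tri_eq[of "-1::'a" 1 m] by simp
next
  case False
  then obtain m where k: "k = - int m" by (metis nle_le nonpos_int_cases)
  have "of_nat m * (-1::'a) ^ (m - 1) * (-1) = of_nat m * (-1) ^ m"
    by (cases m) simp_all
  then show ?thesis using False unfolding m2zpow_def matC_def k using m2pow_tri_eq[of "-1::'a" "-1" m]
    by (simp add: powi_neg_nat)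
qed


lemma det_mul: "m2det (m2mul A B) = m2det A * m2det B"
  by (cases A; cases B) (simp add: algebra_simps)
lemma det_id[simp]: "m2det m2id = 1" by (simp add: m2id_def)
lemma det_adj: "m2det (m2adj A) = m2det A" by (cases A) (simp add: algebra_simps)
lemma det_pow: "m2det (m2pow A m) = m2det A ^ m"
  by (induction m) (simp_all add: det_mul)
lemma det_zpow: "m2det A = 1 \<Longrightarrow> m2det (m2zpow A k) = 1"
  unfolding m2zpow_def by (simp add: det_pow det_adj)
lemma det_prodL: "(\<And>i. i \<in> set xs \<Longrightarrow> m2det (f i) = 1) \<Longrightarrow> m2det (prodL f xs) = 1"
  by (induction xs) (simp_all add: prodL_Cons det_mul)
lemma det_wordW: "m2det X = 1 \<Longrightarrow> m2det Y = 1 \<Longrightarrow> m2det (wordW p q X Y) = 1"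
  unfolding wordW_prodL by (rule det_prodL) (simp add: wfactor_def det_zpow)
lemma det_wordWrev: "m2det X = 1 \<Longrightarrow> m2det Y = 1 \<Longrightarrow> m2det (wordWrev p q X Y) = 1"
  unfolding wordWrev_prodL by (rule det_prodL) (simp add: wfactor_def det_zpow)

definition matQ :: "'a::field \<Rightarrow> 'a \<Rightarrow> 'a m2" where
  "matQ t u = M2 (t - inverse t) 1 (-u) (inverse t - t)"
definition matP :: "'a::field \<Rightarrow> 'a m2" where
  "matP u = M2 1 0 0 (-u)"

lemma intw_Q_CD: "intw (matQ t u) (matC t) (matD t u)"
  unfolding intw_def matQ_def matC_def matD_def by (simp add: algebra_simps)
lemma intw_Q_DC: "intw (matQ t u) (matD t u) (matC t)"
  unfolding intw_def matQ_def matC_def matD_def by (simp add: algebra_simps)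
lemma tr_CD: "m2tr (matC t) = m2tr (matD t u)"
  unfolding matC_def matD_def by simp
lemma det_C: "t \<noteq> 0 \<Longrightarrow> m2det (matC t) = 1" unfolding matC_def by simp
lemma det_D: "t \<noteq> 0 \<Longrightarrow> m2det (matD t u) = 1" unfolding matD_def by simp
lemma QQ: "m2mul (matQ t u) (matQ t u) = m2smul ((t - inverse t)^2 - u) m2id"
  unfolding matQ_def m2id_def by (simp add: algebra_simps power2_eq_square)

lemma m2T_wfactor: "m2T (wfactor p q X Y i) = wfactor p q (m2T X) (m2T Y) i"
  by (simp add: wfactor_def m2T_zpow)

lemma c_sym:
  assumes tb: "two_bridge p q"
  shows "m2_c (wordW p q (matC t) (matD t u)) = - u * m2_b (wordW p q (matC t) (matD t u))"
proof -
  let ?W = "wordW p q (matC t) (matD t u)"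
  have i1: "intw (matP u) (m2T (matC t)) (matD t u)"
    unfolding intw_def matP_def matC_def matD_def by simp
  have i2: "intw (matP u) (m2T (matD t u)) (matC t)"
    unfolding intw_def matP_def matC_def matD_def by simp
  have tr1: "m2tr (m2T (matC t)) = m2tr (matD t u)" "m2tr (m2T (matD t u)) = m2tr (matC t)"
    by (simp_all add: m2T_tr tr_CD[symmetric])
  have "m2T ?W = prodL (\<lambda>i. wfactor p q (m2T (matC t)) (m2T (matD t u)) i) (rev [1..p-1])"
    unfolding wordW_prodL m2T_prodL by (simp add: m2T_wfactor)
  then have "intw (matP u) (m2T ?W) (wordWrev p q (matD t u) (matC t))"
    unfolding wordWrev_prodL using i1 i2 tr1 by (simp add: intw_prodL intw_wfactor)
  then have "intw (matP u) (m2T ?W) ?W" by (simp add: wordWrev_swap[OF tb])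
  then show ?thesis unfolding intw_def matP_def by (cases ?W) simp
qed

lemma WrQ:
  assumes tb: "two_bridge p q"
  shows "m2mul (matQ t u) (wordW p q (matC t) (matD t u)) = m2mul (wordWrev p q (matC t) (matD t u)) (matQ t u)"
  using intw_wordW[OF intw_Q_CD intw_Q_DC tr_CD tr_CD[symmetric]] unfolding intw_def wordWrev_swap[OF tb] .

lemma smul_mul_id: "m2smul k (m2mul A B) = m2mul (m2mul A (m2smul k m2id)) B"
  by (cases A; cases B) (simp add: m2id_def algebra_simps)

lemma kappa_L:
  assumes tb: "two_bridge p q"
  shows "m2smul ((t - inverse t)^2 - u) (m2mul (wordWrev p q (matC t) (matD t u)) (wordW p q (matC t) (matD t u)))
    = m2mul (m2mul (matQ t u) (wordW p q (matC t) (matD t u))) (m2mul (matQ t u) (wordW p q (matC t) (matD t u)))"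
  (is "?l = ?r")
proof -
  let ?W = "wordW p q (matC t) (matD t u)" and ?R = "wordWrev p q (matC t) (matD t u)" and ?Q = "matQ t u"
  have "?l = m2mul (m2mul ?R (m2mul ?Q ?Q)) ?W" unfolding smul_mul_id QQ ..
  also have "\<dots> = m2mul (m2mul ?R ?Q) (m2mul ?Q ?W)" by (simp add: m2mul_assoc)
  also have "\<dots> = ?r" unfolding WrQ[OF tb, symmetric] ..
  finally show ?thesis .
qed

lemma rel1:
  assumes tb: "two_bridge p q"
  shows "m2mul (wordW p q (matC t) (matD t u)) (matC t) = m2mul (matD t u) (wordW p q (matC t) (matD t u))
     \<longleftrightarrow> Apq p q t u = (t - inverse t) * Bpq p q t u"
proof -
  obtain a b c d where W: "wordW p q (matC t) (matD t u) = M2 a b c d" by (cases "wordW p q (matC t) (matD t u)")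
  have c: "c = - u * b" using c_sym[OF tb, of t u] W by simp
  show ?thesis unfolding Apq_def Bpq_def W m2_a.simps m2_b.simps
  proof
    assume "m2mul (M2 a b c d) (matC t) = m2mul (matD t u) (M2 a b c d)"
    then have "a + b * inverse t = t * b" by (simp add: matC_def matD_def)
    then show "a = (t - inverse t) * b" by (simp add: algebra_simps)
  next
    assume h: "a = (t - inverse t) * b"
    show "m2mul (M2 a b c d) (matC t) = m2mul (matD t u) (M2 a b c d)"
      by (simp add: h c matC_def matD_def algebra_simps)
  qed
qed

lemma smul_cancel: "(k::'a::field) \<noteq> 0 \<Longrightarrow> m2smul k A = m2smul k B \<Longrightarrow> A = B"
  by (cases A; cases B) simp

lemma smul_mul_left: "m2mul (m2smul k A) B = m2smul k (m2mul A B)"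
  by (cases A; cases B) (simp add: algebra_simps)

lemma core_rel2:
  assumes tb: "two_bridge p q" and k0: "(t - inverse t)^2 - u \<noteq> 0"
  shows "m2mul (m2mul (wordWrev p q (matC t) (matD t u)) (wordW p q (matC t) (matD t u))) Z = m2id
     \<longleftrightarrow> m2mul (m2mul (m2mul (matQ t u) (wordW p q (matC t) (matD t u))) (m2mul (matQ t u) (wordW p q (matC t) (matD t u)))) Z
        = m2smul ((t - inverse t)^2 - u) m2id"
  (is "?L = ?R")
proof -
  let ?k = "(t - inverse t)^2 - u"
  have e: "m2mul (m2mul (m2mul (matQ t u) (wordW p q (matC t) (matD t u))) (m2mul (matQ t u) (wordW p q (matC t) (matD t u)))) Z
     = m2smul ?k (m2mul (m2mul (wordWrev p q (matC t) (matD t u)) (wordW p q (matC t) (matD t u))) Z)"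
    unfolding kappa_L[OF tb, symmetric] smul_mul_left ..
  show ?thesis unfolding e using smul_cancel[OF k0] by metis
qed

lemma QW_entries: "m2mul (matQ t u) (M2 a b c d) =
   M2 ((t - inverse t)*a + c) ((t - inverse t)*b + d) (-u*a - (t - inverse t)*c) (-u*b - (t - inverse t)*d)"
  unfolding matQ_def by (simp add: algebra_simps)

lemma W_facts:
  assumes tb: "two_bridge p q" and t0: "t \<noteq> 0"
  obtains a b c d where "wordW p q (matC t) (matD t u) = M2 a b c d" "c = - u * b" "a * d - b * c = 1"
    "Apq p q t u = a" "Bpq p q t u = b" "Dpq p q t u = d"
proof -
  obtain a b c d where W: "wordW p q (matC t) (matD t u) = M2 a b c d" by (cases "wordW p q (matC t) (matD t u)")
  have c: "c = - u * b" using c_sym[OF tb, of t u] W by simp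
  have "m2det (wordW p q (matC t) (matD t u)) = 1" using det_wordW det_C[OF t0] det_D[OF t0] by blast
  then have "a * d - b * c = 1" using W by simp
  then show ?thesis using that W c unfolding Apq_def Bpq_def Dpq_def by simp
qed


lemma NNZ: "m2mul (m2mul (M2 n1 n2 0 n4) (M2 n1 n2 0 n4)) (M2 z1 z2 0 z4)
   = M2 (n1*n1*z1) (n1*n1*z2 + (n1*n2 + n2*n4)*z4) 0 (n4*n4*z4)"
  by (simp add: algebra_simps)

lemma suff_gen:
  fixes t u :: "'a::field"
  assumes tb: "two_bridge p q" and t0: "t \<noteq> 0" and d0: "t - inverse t \<noteq> 0"
    and e1: "Apq p q t u = (t - inverse t) * Bpq p q t u"
    and e2: "t powi k * ((t - inverse t)^2 - u) * (Bpq p q t u)^2 = 1"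
  shows "m2mul (m2mul (wordWrev p q (matC t) (matD t u)) (wordW p q (matC t) (matD t u))) (m2zpow (matC t) k) = m2id"
proof -
  define dl where "dl = t - inverse t"
  define kp where "kp = dl^2 - u"
  obtain a b c d where W: "wordW p q (matC t) (matD t u) = M2 a b c d" and c: "c = - u * b"
    and det: "a * d - b * c = 1" and A: "Apq p q t u = a" and B: "Bpq p q t u = b" and D: "Dpq p q t u = d"
    by (rule W_facts[OF tb t0])
  have k0: "kp \<noteq> 0" using e2 unfolding kp_def dl_def by auto
  obtain z where Z: "m2zpow (matC t) k = M2 (t powi k) z 0 (inverse t powi k)"
    and zz: "dl * z = t powi k - inverse t powi k" using zpow_C[OF t0] unfolding dl_def by blast
  define z1 where "z1 = t powi k"
  define z4 where "z4 = inverse t powi k"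
  have z14: "z1 * z4 = 1" unfolding z1_def z4_def using t0 by (simp add: power_int_inverse)
  have a: "a = dl * b" using e1 A B unfolding dl_def by simp
  define n1 where "n1 = kp * b"
  define n2 where "n2 = dl * b + d"
  define n4 where "n4 = - u * b - dl * d"
  have N: "m2mul (matQ t u) (wordW p q (matC t) (matD t u)) = M2 n1 n2 0 n4"
    unfolding W QW_entries n1_def n2_def n4_def kp_def dl_def[symmetric] a c
    by (simp add: algebra_simps power2_eq_square)
  have det2: "n1 * n4 = - kp" unfolding n1_def n4_def using det unfolding a c
    by (simp add: algebra_simps) (metis (no_types, lifting) mult.commute mult.left_commute distrib_left mult.right_neutral)
  have comm: "n1 - n4 = dl * n2" unfolding n1_def n4_def n2_def kp_def by (simp add: algebra_simps power2_eq_square)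
  have e2': "z1 * kp * b^2 = 1" using e2 B unfolding z1_def kp_def dl_def by simp
  have f1: "n1 * n1 * z1 = kp" unfolding n1_def using e2' k0
    by (metis (no_types, lifting) mult.commute mult.left_commute power2_eq_square mult.right_neutral)
  have "(n4 * n4 * z4) * (n1 * n1 * z1) = (n1 * n4)^2 * (z1 * z4)" by (simp add: algebra_simps power2_eq_square)
  then have "(n4 * n4 * z4) * kp = kp * kp" using f1 det2 z14 by (simp add: power2_eq_square)
  then have f4: "n4 * n4 * z4 = kp" using k0 by simp
  have "dl * (n1*n1*z + (n1*n2 + n2*n4)*z4) = n1*n1*(dl*z) + (n1 + n4)*(dl*n2)*z4" by (simp add: algebra_simps)
  also have "\<dots> = n1*n1*(z1 - z4) + (n1 + n4)*(n1 - n4)*z4" unfolding comm zz z1_def z4_def ..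
  also have "\<dots> = n1*n1*z1 - n4*n4*z4" by (simp add: algebra_simps)
  finally have "dl * (n1*n1*z + (n1*n2 + n2*n4)*z4) = 0" using f1 f4 by simp
  then have f2: "n1*n1*z + (n1*n2 + n2*n4)*z4 = 0" using d0 unfolding dl_def by simp
  have "m2mul (m2mul (m2mul (matQ t u) (wordW p q (matC t) (matD t u))) (m2mul (matQ t u) (wordW p q (matC t) (matD t u)))) (m2zpow (matC t) k)
     = m2smul kp m2id"
    unfolding N Z NNZ z1_def[symmetric] z4_def[symmetric] f1 f2 f4 by (simp add: m2id_def)
  then show ?thesis using core_rel2[OF tb] k0 unfolding kp_def dl_def by blast
qed

lemma nec_gen:
  fixes t u :: "'a::field"
  assumes tb: "two_bridge p q" and t0: "t \<noteq> 0"
    and e1: "Apq p q t u = (t - inverse t) * Bpq p q t u"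
    and k0: "(t - inverse t)^2 - u \<noteq> 0"
    and rel: "m2mul (m2mul (wordWrev p q (matC t) (matD t u)) (wordW p q (matC t) (matD t u))) (m2zpow (matC t) k) = m2id"
  shows "t powi k * ((t - inverse t)^2 - u) * (Bpq p q t u)^2 = 1"
proof -
  define dl where "dl = t - inverse t"
  define kp where "kp = dl^2 - u"
  obtain a b c d where W: "wordW p q (matC t) (matD t u) = M2 a b c d" and c: "c = - u * b"
    and det: "a * d - b * c = 1" and A: "Apq p q t u = a" and B: "Bpq p q t u = b" and D: "Dpq p q t u = d"
    by (rule W_facts[OF tb t0])
  obtain z where Z: "m2zpow (matC t) k = M2 (t powi k) z 0 (inverse t powi k)"
    using zpow_C[OF t0] by blast
  have a: "a = dl * b" using e1 A B unfolding dl_def by simp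
  define n1 where "n1 = kp * b"
  define n2 where "n2 = dl * b + d"
  define n4 where "n4 = - u * b - dl * d"
  have N: "m2mul (matQ t u) (wordW p q (matC t) (matD t u)) = M2 n1 n2 0 n4"
    unfolding W QW_entries n1_def n2_def n4_def kp_def dl_def[symmetric] a c
    by (simp add: algebra_simps power2_eq_square)
  have "m2mul (m2mul (M2 n1 n2 0 n4) (M2 n1 n2 0 n4)) (M2 (t powi k) z 0 (inverse t powi k)) = m2smul kp m2id"
    using core_rel2[OF tb k0] rel unfolding N Z kp_def dl_def by simp
  then have "n1 * n1 * t powi k = kp" unfolding NNZ by (simp add: m2id_def)
  then have "kp * (kp * b * b * t powi k) = kp * 1" unfolding n1_def by (simp add: algebra_simps)
  then have "kp * b * b * t powi k = 1" using k0 unfolding kp_def dl_def by simp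
  then show ?thesis using B unfolding kp_def dl_def by (simp add: algebra_simps power2_eq_square)
qed

lemma m1nz: "(-1::'a::field) \<noteq> 0" by simp

lemma minus_one_facts:
  fixes u :: "'a::field_char_0"
  assumes tb: "two_bridge p q" and e1: "Apq p q (-1) u = 0"
  obtains a b c d where "wordW p q (matC (-1)) (matD (-1) u) = M2 a b c d" "c = - u * b"
    "u * b * b = 1" "Apq p q (-1) u = a" "Bpq p q (-1) u = b" "Dpq p q (-1) u = d" "a = 0"
    "m2mul (matQ (-1) u) (wordW p q (matC (-1)) (matD (-1) u)) = M2 (- u * b) d 0 (- u * b)"
proof -
  obtain a b c d where W: "wordW p q (matC (-1)) (matD (-1) u) = M2 a b c d" and c: "c = - u * b"
    and det: "a * d - b * c = 1" and A: "Apq p q (-1) u = a" and B: "Bpq p q (-1) u = b"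
    and D: "Dpq p q (-1) u = d"
    by (rule W_facts[OF tb m1nz])
  have a: "a = 0" using e1 A by simp
  have ub: "u * b * b = 1" using det unfolding a c by (simp add: algebra_simps)
  have N: "m2mul (matQ (-1) u) (wordW p q (matC (-1)) (matD (-1) u)) = M2 (- u * b) d 0 (- u * b)"
    unfolding W QW_entries a c by simp
  show ?thesis using that W c ub A B D a N by blast
qed

lemma nec_m1:
  fixes u :: "'a::field_char_0"
  assumes tb: "two_bridge p q" and e1: "Apq p q (-1) u = 0"
    and rel: "m2mul (m2mul (wordWrev p q (matC (-1)) (matD (-1) u)) (wordW p q (matC (-1)) (matD (-1) u))) (m2zpow (matC (-1)) k) = m2id"
  shows "odd k \<and> - of_int k * u * Bpq p q (-1) u = 2 * Dpq p q (-1) u"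
proof -
  obtain a b c d where W: "wordW p q (matC (-1)) (matD (-1) u) = M2 a b c d" and c: "c = - u * b"
    and ub: "u * b * b = 1" and A: "Apq p q (-1) u = a" and B: "Bpq p q (-1) u = b" and D: "Dpq p q (-1) u = d"
    and a: "a = 0"
    and N: "m2mul (matQ (-1) u) (wordW p q (matC (-1)) (matD (-1) u)) = M2 (- u * b) d 0 (- u * b)"
    by (rule minus_one_facts[OF tb e1])
  have u0: "u \<noteq> 0" using ub by auto
  have k0: "((-1::'a) - inverse (-1))^2 - u \<noteq> 0" using u0 by simp
  define ep where "ep = ((-1::'a) powi k)"
  have "m2mul (m2mul (M2 (- u * b) d 0 (- u * b)) (M2 (- u * b) d 0 (- u * b))) (M2 ep (- of_int k * ep) 0 ep) = m2smul (- u) m2id"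
    using core_rel2[OF tb k0] rel unfolding N zpow_Cm1 ep_def by simp
  then have h1: "u * b * (u * b) * ep = - u" and h2: "u * b * (u * b) * (- of_int k * ep) + (- (u * b * d) - d * (u * b)) * ep = 0"
    unfolding NNZ by (simp_all add: m2id_def)
  have ubub: "u * b * (u * b) = u"
  proof -
    have e: "u * b * (u * b) = u * (u * b * b)" by (simp only: mult_ac)
    show ?thesis unfolding e ub by simp
  qed
  have "u * ep = - u" using h1 ubub by simp
  then have "u * (ep + 1) = 0" by (simp add: algebra_simps)
  then have "ep + 1 = 0" using u0 by simp
  then have ep1: "ep = -1" by (simp add: eq_neg_iff_add_eq_0)
  then have "odd k" unfolding ep_def by (auto simp: power_int_minus_left split: if_splits)
  have "u * of_int k + 2 * (u * b * d) = u * (u * b * b) * of_int k + 2 * (u * b * d)" by (simp add: ub)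
  also have "\<dots> = 0" using h2 ep1 by (simp add: algebra_simps)
  finally have "u * of_int k + 2 * (u * b * d) = 0" .
  then have "u * (of_int k + 2 * b * d) = 0" by (simp add: algebra_simps)
  then have "of_int k + 2 * b * d = 0" using u0 by simp
  then have kb: "of_int k = - 2 * b * d" by (simp add: eq_neg_iff_add_eq_0)
  have "- of_int k * u * b = 2 * d * (u * b * b)" unfolding kb by (simp add: algebra_simps)
  then show ?thesis using `odd k` ub B D by simp
qed

lemma nec_p1:
  fixes u :: "'a::field_char_0"
  assumes tb: "two_bridge p q" and e1: "Apq p q 1 u = 0"
    and rel: "m2mul (m2mul (wordWrev p q (matC 1) (matD 1 u)) (wordW p q (matC 1) (matD 1 u))) (m2zpow (matC 1) k) = m2id"
  shows False
proof -
  obtain a b c d where W: "wordW p q (matC 1) (matD 1 u) = M2 a b c d" and c: "c = - u * b"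
    and det: "a * d - b * c = 1" and A: "Apq p q 1 u = a"
    and B: "Bpq p q 1 u = b" and D: "Dpq p q 1 u = d"
    by (rule W_facts[OF tb one_neq_zero])
  have a: "a = 0" using e1 A by simp
  have ub: "u * b * b = 1" using det unfolding a c by (simp add: algebra_simps)
  have N: "m2mul (matQ 1 u) (wordW p q (matC 1) (matD 1 u)) = M2 (- u * b) d 0 (- u * b)"
    unfolding W QW_entries a c by simp
  have u0: "u \<noteq> 0" using ub by auto
  have k0: "((1::'a) - inverse 1)^2 - u \<noteq> 0" using u0 by simp
  have "m2mul (m2mul (M2 (- u * b) d 0 (- u * b)) (M2 (- u * b) d 0 (- u * b))) (M2 1 (of_int k) 0 1) = m2smul (- u) m2id"
    using core_rel2[OF tb k0] rel unfolding N zpow_C1 by simp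
  then have h1: "u * b * (u * b) = - u" unfolding NNZ by (simp add: m2id_def)
  have ubub: "u * b * (u * b) = u"
  proof -
    have e: "u * b * (u * b) = u * (u * b * b)" by (simp only: mult_ac)
    show ?thesis unfolding e ub by simp
  qed
  show False using h1 ubub u0 by simp
qed

lemma suff_m1:
  fixes u :: "'a::field_char_0"
  assumes tb: "two_bridge p q" and e1: "Apq p q (-1) u = 0" and ko: "odd k"
    and e2: "- of_int k * u * Bpq p q (-1) u = 2 * Dpq p q (-1) u"
  shows "m2mul (m2mul (wordWrev p q (matC (-1)) (matD (-1) u)) (wordW p q (matC (-1)) (matD (-1) u))) (m2zpow (matC (-1)) k) = m2id"
proof -
  obtain a b c d where W: "wordW p q (matC (-1)) (matD (-1) u) = M2 a b c d" and c: "c = - u * b"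
    and ub: "u * b * b = 1" and A: "Apq p q (-1) u = a" and B: "Bpq p q (-1) u = b" and D: "Dpq p q (-1) u = d"
    and a: "a = 0"
    and N: "m2mul (matQ (-1) u) (wordW p q (matC (-1)) (matD (-1) u)) = M2 (- u * b) d 0 (- u * b)"
    by (rule minus_one_facts[OF tb e1])
  have u0: "u \<noteq> 0" using ub by auto
  have k0: "((-1::'a) - inverse (-1))^2 - u \<noteq> 0" using u0 by simp
  have ep: "(-1::'a) powi k = -1" using ko by (simp add: power_int_minus_left)
  have ubub: "u * b * (u * b) = u"
  proof -
    have e: "u * b * (u * b) = u * (u * b * b)" by (simp only: mult_ac)
    show ?thesis unfolding e ub by simp
  qed
  have "2 * b * d = b * (- of_int k * u * b)" using e2 B D by simp
  also have "\<dots> = - of_int k" using ub by (simp add: algebra_simps)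
  finally have bd: "2 * b * d = - of_int k" .
  have "m2mul (m2mul (M2 (- u * b) d 0 (- u * b)) (M2 (- u * b) d 0 (- u * b))) (M2 (-1) (of_int k) 0 (-1)) = m2smul (- u) m2id"
  proof -
    have sq: "(- u * b) * (- u * b) = u * b * (u * b)" by simp
    have f1: "(- u * b) * (- u * b) * (-1) = - u" unfolding sq ubub by simp
    have x2: "((- u * b) * d + d * (- u * b)) * (-1) = u * (2 * b * d)" by (simp add: algebra_simps)
    have f2: "(- u * b) * (- u * b) * of_int k + ((- u * b) * d + d * (- u * b)) * (-1) = 0"
      unfolding sq ubub x2 bd by simp
    show ?thesis unfolding NNZ f1 f2 by (simp add: m2id_def)
  qed
  then show ?thesis using core_rel2[OF tb k0] unfolding N zpow_Cm1 ep by simp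
qed


lemma polar1:
  fixes x1 x2 x3 x4 y1 y2 y3 y4 h1 h2 t s :: "'a::field"
  assumes "x1*h1 + x2*h2 = t*h1" "x3*h1 + x4*h2 = t*h2" "x1 + x4 = t + s" "y1 + y4 = t + s" "t*s = 1"
  shows "x1*(t*h1 - (y1*h1 + y2*h2)) + x2*(t*h2 - (y3*h1 + y4*h2)) - s*(t*h1 - (y1*h1 + y2*h2))
     = (t^2 + s^2 - (x1*y1 + x2*y3 + x3*y2 + x4*y4)) * h1"
  using assms by algebra

lemma polar2:
  fixes x1 x2 x3 x4 y1 y2 y3 y4 h1 h2 t s :: "'a::field"
  assumes "x1*h1 + x2*h2 = t*h1" "x3*h1 + x4*h2 = t*h2" "x1 + x4 = t + s" "y1 + y4 = t + s" "t*s = 1"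
  shows "x3*(t*h1 - (y1*h1 + y2*h2)) + x4*(t*h2 - (y3*h1 + y4*h2)) - s*(t*h2 - (y3*h1 + y4*h2))
     = (t^2 + s^2 - (x1*y1 + x2*y3 + x3*y2 + x4*y4)) * h2"
  using assms by algebra

fun mv :: "'a::comm_ring_1 m2 \<Rightarrow> 'a \<times> 'a \<Rightarrow> 'a \<times> 'a" where
  "mv (M2 a b c d) (x, y) = (a*x + b*y, c*x + d*y)"

definition sv :: "'a::comm_ring_1 \<Rightarrow> 'a \<times> 'a \<Rightarrow> 'a \<times> 'a" where
  "sv k v = (k * fst v, k * snd v)"

lemma mv_mul: "mv (m2mul A B) v = mv A (mv B v)"
  by (cases A; cases B; cases v) (simp add: algebra_simps)

lemma mv_id[simp]: "mv m2id v = v" by (cases v) (simp add: m2id_def)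

lemma mv_sv: "mv A (sv k v) = sv k (mv A v)"
  by (cases A; cases v) (simp add: sv_def algebra_simps)

definition comm_eig :: "'a::comm_ring_1 m2 \<Rightarrow> 'a m2 \<Rightarrow> bool" where
  "comm_eig X Y \<longleftrightarrow> (\<exists>v \<alpha> \<beta>. v \<noteq> (0,0) \<and> mv X v = sv \<alpha> v \<and> mv Y v = sv \<beta> v)"

lemma eig_exists:
  fixes X :: "'a::field m2"
  assumes "m2det X = 1" "m2tr X = t + s" "t * s = 1"
  shows "\<exists>v. v \<noteq> (0,0) \<and> mv X v = sv t v"
proof -
  obtain x1 x2 x3 x4 where X: "X = M2 x1 x2 x3 x4" by (cases X)
  have d: "x1*x4 - x2*x3 = 1" "x1 + x4 = t + s" using assms X by auto
  show ?thesis
  proof (cases "x2 \<noteq> 0 \<or> x1 \<noteq> t")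
    case True
    have "x3*x2 + x4*(t - x1) = t*(t - x1)" using d assms(3) by algebra
    then show ?thesis using True X by (intro exI[of _ "(x2, t - x1)"]) (auto simp: sv_def algebra_simps)
  next
    case False
    then have f: "x2 = 0" "x1 = t" by auto
    show ?thesis
    proof (cases "x3 \<noteq> 0 \<or> x4 \<noteq> t")
      case True
      then show ?thesis using f X by (intro exI[of _ "(t - x4, x3)"]) (auto simp: sv_def algebra_simps)
    next
      case False
      then show ?thesis using f X by (intro exI[of _ "(1, 0)"]) (auto simp: sv_def)
    qed
  qed
qed

lemma dep_vec:
  fixes v w :: "'a::field \<times> 'a"
  assumes "v \<noteq> (0,0)" "fst v * snd w - fst w * snd v = 0"
  shows "\<exists>c. w = sv c v"
proof (cases "fst v = 0")
  case True
  then have "snd v \<noteq> 0" using assms(1) by (cases v) auto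
  moreover have "fst w * snd v = 0" using assms(2) True by simp
  ultimately show ?thesis using True
    by (intro exI[of _ "snd w / snd v"]) (cases v; cases w; simp add: sv_def)
next
  case False
  have "snd w = fst w * snd v / fst v" using assms(2) False by (simp add: field_simps)
  then show ?thesis using False
    by (intro exI[of _ "fst w / fst v"]) (cases v; cases w; simp add: sv_def)
qed

definition mkH :: "'a \<times> 'a \<Rightarrow> 'a \<times> 'a \<Rightarrow> 'a m2" where
  "mkH v w = M2 (fst v) (fst w) (snd v) (snd w)"

lemma CH_Y:
  fixes Y :: "'a::field m2"
  assumes "m2det Y = 1" "m2tr Y = t + s" "t * s = 1"
  shows "mv Y (t*fst h - fst (mv Y h), t*snd h - snd (mv Y h)) = sv s (t*fst h - fst (mv Y h), t*snd h - snd (mv Y h))"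
proof -
  obtain y1 y2 y3 y4 where Y: "Y = M2 y1 y2 y3 y4" by (cases Y)
  obtain h1 h2 where h: "h = (h1, h2)" by (cases h)
  have d: "y1*y4 - y2*y3 = 1" "y1 + y4 = t + s" using assms Y by auto
  show ?thesis unfolding Y h sv_def using d assms(3)
    by simp (intro conjI; algebra)
qed

lemma normal_form:
  fixes X Y :: "'a::field m2"
  assumes dX: "m2det X = 1" and dY: "m2det Y = 1" and tX: "m2tr X = t + s" and tY: "m2tr Y = t + s"
    and ts: "t * s = 1" and nc: "\<not> comm_eig X Y"
  shows "\<exists>H. m2det H \<noteq> 0 \<and> intw H (matC t) X \<and> intw H (matD t (t^2 + s^2 - m2tr (m2mul X Y))) Y
           \<and> t^2 + s^2 - m2tr (m2mul X Y) \<noteq> 0"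
proof -
  obtain h where h0: "h \<noteq> (0,0)" and hX: "mv X h = sv t h" using eig_exists[OF dX tX ts] by blast
  obtain x1 x2 x3 x4 where X: "X = M2 x1 x2 x3 x4" by (cases X)
  obtain y1 y2 y3 y4 where Y: "Y = M2 y1 y2 y3 y4" by (cases Y)
  obtain a1 a2 where h: "h = (a1, a2)" by (cases h)
  have hx: "x1*a1 + x2*a2 = t*a1" "x3*a1 + x4*a2 = t*a2" using hX X h by (auto simp: sv_def)
  have dd: "x1*x4 - x2*x3 = 1" "x1 + x4 = t + s" "y1*y4 - y2*y3 = 1" "y1 + y4 = t + s"
    using dX dY tX tY X Y by auto
  define u where "u = t^2 + s^2 - m2tr (m2mul X Y)"
  have u: "u = t^2 + s^2 - (x1*y1 + x2*y3 + x3*y2 + x4*y4)" unfolding u_def X Y by simp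
  define z1 where "z1 = t*a1 - (y1*a1 + y2*a2)"
  define z2 where "z2 = t*a2 - (y3*a1 + y4*a2)"
  have yz: "y1*z1 + y2*z2 = s*z1" "y3*z1 + y4*z2 = s*z2"
    unfolding z1_def z2_def using dd ts by algebra+
  have xz: "x1*z1 + x2*z2 - s*z1 = u*a1" "x3*z1 + x4*z2 - s*z2 = u*a2"
    unfolding z1_def z2_def u using polar1[OF hx dd(2) dd(4) ts] polar2[OF hx dd(2) dd(4) ts] by simp_all
  have u0: "u \<noteq> 0"
  proof
    assume u0: "u = 0"
    show False
    proof (cases "(z1, z2) = (0,0)")
      case True
      then have "mv Y h = sv t h" using Y h unfolding z1_def z2_def by (auto simp: sv_def algebra_simps)
      then show False using nc h0 hX unfolding comm_eig_def by blast
    next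
      case False
      have "mv X (z1, z2) = sv s (z1, z2)" "mv Y (z1, z2) = sv s (z1, z2)"
        using xz yz u0 X Y by (auto simp: sv_def algebra_simps)
      then show False using nc False unfolding comm_eig_def by blast
    qed
  qed
  define H where "H = M2 a1 (z1/u) a2 (z2/u)"
  have s_inv: "inverse t = s" by (rule inverse_unique[OF ts])
  have i1: "intw H (matC t) X"
    unfolding intw_def H_def X matC_def s_inv using hx xz u0
    by (simp add: field_simps)
  have i2: "intw H (matD t u) Y"
  proof -
    have yh: "y1*a1 + y2*a2 = t*a1 - z1" "y3*a1 + y4*a2 = t*a2 - z2" unfolding z1_def z2_def by simp_all
    show ?thesis unfolding intw_def H_def Y matD_def s_inv using yz yh u0
      by (simp add: field_simps)
  qed
  have dH: "m2det H \<noteq> 0"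
  proof
    assume "m2det H = 0"
    then have "fst h * snd (z1/u, z2/u) - fst (z1/u, z2/u) * snd h = 0" unfolding H_def h by simp
    then obtain c where "(z1/u, z2/u) = sv c h" using dep_vec[OF h0] by blast
    then have "z1 = u*c*a1" "z2 = u*c*a2" using u0 h by (auto simp: sv_def field_simps)
    then have "mv Y h = sv (t - u*c) h" using Y h unfolding z1_def z2_def by (auto simp: sv_def algebra_simps)
    then show False using nc h0 hX unfolding comm_eig_def by blast
  qed
  show ?thesis using dH i1 i2 u0 unfolding u_def by blast
qed


lemma mul_adj_right: "m2mul H (m2adj H) = m2smul (m2det H) m2id"
  by (cases H) (simp add: m2id_def algebra_simps)
lemma mul_adj_left: "m2mul (m2adj H) H = m2smul (m2det H) m2id"
  by (cases H) (simp add: m2id_def algebra_simps)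
lemma smul_id_right: "m2mul A (m2smul k m2id) = m2smul k A"
  by (cases A) (simp add: m2id_def algebra_simps)
lemma smul_id_left: "m2mul (m2smul k m2id) A = m2smul k A"
  by (cases A) (simp add: m2id_def algebra_simps)

lemma cancel_right:
  fixes H :: "'a::field m2"
  assumes "m2mul A H = m2mul B H" "m2det H \<noteq> 0" shows "A = B"
proof -
  have "m2mul (m2mul A H) (m2adj H) = m2mul (m2mul B H) (m2adj H)" using assms by simp
  then have "m2smul (m2det H) A = m2smul (m2det H) B"
    by (simp add: m2mul_assoc mul_adj_right smul_id_right)
  then show ?thesis using smul_cancel assms(2) by blast
qed

lemma cancel_left:
  fixes H :: "'a::field m2"
  assumes "m2mul H A = m2mul H B" "m2det H \<noteq> 0" shows "A = B"
proof -
  have "m2mul (m2adj H) (m2mul H A) = m2mul (m2adj H) (m2mul H B)" using assms by simp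
  then have "m2smul (m2det H) A = m2smul (m2det H) B"
    by (simp add: m2mul_assoc[symmetric] mul_adj_left smul_id_left)
  then show ?thesis using smul_cancel assms(2) by blast
qed

lemma intw_eq_iff:
  fixes H :: "'a::field m2"
  assumes "m2det H \<noteq> 0" "intw H M M'" "intw H N N'"
  shows "M = N \<longleftrightarrow> M' = N'"
  using assms cancel_left[OF _ assms(1)] cancel_right[OF _ assms(1)] unfolding intw_def by metis

lemma tr_adj_conj: "m2tr (m2mul (m2adj H) (m2mul X H)) = m2det H * m2tr X"
  by (cases H; cases X) (simp add: algebra_simps)

lemma intw_tr:
  fixes H :: "'a::field m2"
  assumes "m2det H \<noteq> 0" "intw H X X'" shows "m2tr X = m2tr X'"
proof -
  have "m2mul (m2adj H) (m2mul H X) = m2mul (m2adj H) (m2mul X' H)" using assms(2) unfolding intw_def by simp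
  then have "m2smul (m2det H) X = m2mul (m2adj H) (m2mul X' H)"
    by (simp add: m2mul_assoc[symmetric] mul_adj_left smul_id_left)
  then have "m2tr (m2smul (m2det H) X) = m2det H * m2tr X'" by (simp add: tr_adj_conj)
  moreover have "m2tr (m2smul (m2det H) X) = m2det H * m2tr X" by (cases X) (simp add: algebra_simps)
  ultimately show ?thesis using assms(1) by simp
qed

lemma rel_transfer:
  fixes H :: "'a::field m2"
  assumes dH: "m2det H \<noteq> 0" and iA: "intw H A X" and iB: "intw H B Y"
    and tA: "m2tr A = m2tr X" and tB: "m2tr B = m2tr Y"
  shows "(m2mul (wordW p q A B) A = m2mul B (wordW p q A B) \<longleftrightarrow> m2mul (wordW p q X Y) X = m2mul Y (wordW p q X Y))
    \<and> (m2mul (m2mul (wordWrev p q A B) (wordW p q A B)) (m2zpow A k) = m2id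
         \<longleftrightarrow> m2mul (m2mul (wordWrev p q X Y) (wordW p q X Y)) (m2zpow X k) = m2id)"
proof
  have iW: "intw H (wordW p q A B) (wordW p q X Y)" by (rule intw_wordW[OF iA iB tA tB])
  have iR: "intw H (wordWrev p q A B) (wordWrev p q X Y)" by (rule intw_wordWrev[OF iA iB tA tB])
  have iZ: "intw H (m2zpow A k) (m2zpow X k)" by (rule intw_zpow[OF iA tA])
  show "(m2mul (wordW p q A B) A = m2mul B (wordW p q A B) \<longleftrightarrow> m2mul (wordW p q X Y) X = m2mul Y (wordW p q X Y))"
    by (rule intw_eq_iff[OF dH]) (simp_all add: intw_mul iW iA iB)
  show "(m2mul (m2mul (wordWrev p q A B) (wordW p q A B)) (m2zpow A k) = m2id
         \<longleftrightarrow> m2mul (m2mul (wordWrev p q X Y) (wordW p q X Y)) (m2zpow X k) = m2id)"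
    by (rule intw_eq_iff[OF dH]) (simp_all add: intw_mul iW iR iZ intw_id)
qed

lemma mv_zero_det:
  fixes H :: "'a::field m2"
  assumes "mv H v = (0,0)" "v \<noteq> (0,0)" shows "m2det H = 0"
proof -
  obtain a b c d where H: "H = M2 a b c d" by (cases H)
  obtain v1 v2 where v: "v = (v1, v2)" by (cases v)
  have e: "a*v1 + b*v2 = 0" "c*v1 + d*v2 = 0" using assms H v by auto
  have "(a*d - b*c) * v1 = 0" "(a*d - b*c) * v2 = 0" using e by algebra+
  then show ?thesis using assms(2) H v by auto
qed

lemma comm_eig_transfer:
  fixes H :: "'a::field m2"
  assumes dH: "m2det H \<noteq> 0" and iA: "intw H A X" and iB: "intw H B Y" and ce: "comm_eig A B"
  shows "comm_eig X Y"
proof -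
  obtain v a b where v: "v \<noteq> (0,0)" "mv A v = sv a v" "mv B v = sv b v" using ce unfolding comm_eig_def by blast
  have "mv H v \<noteq> (0,0)" using mv_zero_det[of H v] dH v(1) by blast
  moreover have "mv X (mv H v) = sv a (mv H v)"
    using iA v(2) unfolding intw_def by (metis mv_mul mv_sv)
  moreover have "mv Y (mv H v) = sv b (mv H v)"
    using iB v(3) unfolding intw_def by (metis mv_mul mv_sv)
  ultimately show ?thesis unfolding comm_eig_def by blast
qed

lemma comm_eig_CD:
  fixes t u :: "'a::field"
  assumes "t \<noteq> 0" "u = 0 \<or> (t - inverse t)^2 - u = 0"
  shows "comm_eig (matC t) (matD t u)"
  using assms(2)
proof
  assume "u = 0"
  then show ?thesis unfolding comm_eig_def matC_def matD_def
    by (intro exI[of _ "(1,0)"] exI[of _ t]) (simp add: sv_def)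
next
  assume k: "(t - inverse t)^2 - u = 0"
  have "mv (matC t) (1, - (t - inverse t)) = sv (inverse t) (1, - (t - inverse t))"
    unfolding matC_def by (simp add: sv_def algebra_simps)
  moreover have "mv (matD t u) (1, - (t - inverse t)) = sv t (1, - (t - inverse t))"
    using k unfolding matD_def by (simp add: sv_def algebra_simps power2_eq_square)
  moreover have "(1::'a, - (t - inverse t)) \<noteq> (0,0)" by simp
  ultimately show ?thesis unfolding comm_eig_def by blast
qed

definition commK :: "'a::comm_ring_1 m2 \<Rightarrow> 'a m2 \<Rightarrow> 'a m2" where
  "commK X Y = m2mul (m2mul X Y) (m2mul (m2adj X) (m2adj Y))"

lemma intw_commK:
  assumes "intw H A X" "intw H B Y" "m2tr A = m2tr X" "m2tr B = m2tr Y"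
  shows "intw H (commK A B) (commK X Y)"
  unfolding commK_def using assms by (simp add: intw_mul intw_adj)

lemma tr_commK_CD:
  fixes t u :: "'a::field"
  assumes "t \<noteq> 0"
  shows "m2tr (commK (matC t) (matD t u)) = 2 + u * (u - (t - inverse t)^2)"
  unfolding commK_def matC_def matD_def using assms
  by (simp add: field_simps power2_eq_square)

lemma mv_adj_eig: "mv X v = sv a v \<Longrightarrow> mv (m2adj X) v = sv (m2tr X - a) v"
  by (cases X; cases v) (auto simp: sv_def algebra_simps)

lemma sv_eq_self: "sv c v = v \<Longrightarrow> v \<noteq> ((0::'a::field),0) \<Longrightarrow> c = 1"
  by (cases v) (auto simp: sv_def)

lemma sv_sv: "sv a (sv b v) = sv (a*b) v" by (simp add: sv_def)

lemma eig_adj_prod: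
  fixes X :: "'a::field m2"
  assumes "m2det X = 1" "mv X v = sv a v" "v \<noteq> (0,0)"
  shows "a * (m2tr X - a) = 1"
proof -
  have "mv (m2mul X (m2adj X)) v = sv (a * (m2tr X - a)) v"
    using assms by (simp add: mv_mul mv_adj_eig mv_sv sv_sv mult.commute)
  moreover have "m2mul X (m2adj X) = m2id" using mul_adj_right[of X] assms(1) by (simp add: m2id_def)
  ultimately show ?thesis using sv_eq_self assms(3) by (metis mv_id)
qed

lemma comm_eig_trK:
  fixes X Y :: "'a::field m2"
  assumes dX: "m2det X = 1" and dY: "m2det Y = 1" and ce: "comm_eig X Y"
  shows "m2tr (commK X Y) = 2"
proof -
  obtain v a b where v: "v \<noteq> (0,0)" "mv X v = sv a v" "mv Y v = sv b v" using ce unfolding comm_eig_def by blast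
  have pa: "a * (m2tr X - a) = 1" by (rule eig_adj_prod[OF dX v(2) v(1)])
  have pb: "b * (m2tr Y - b) = 1" by (rule eig_adj_prod[OF dY v(3) v(1)])
  have "mv (commK X Y) v = sv ((a * (m2tr X - a)) * (b * (m2tr Y - b))) v"
    unfolding commK_def using v
    by (simp add: mv_mul mv_adj_eig mv_sv sv_sv algebra_simps)
  then have Kv: "mv (commK X Y) v = v" using pa pb by (simp add: sv_def)
  have dK: "m2det (commK X Y) = 1" unfolding commK_def by (simp add: det_mul det_adj dX dY)
  obtain k1 k2 k3 k4 where K: "commK X Y = M2 k1 k2 k3 k4" by (cases "commK X Y")
  have "mv (M2 (k1 - 1) k2 k3 (k4 - 1)) v = (0,0)" using Kv K by (cases v) (simp add: algebra_simps)
  then have "m2det (M2 (k1 - 1) k2 k3 (k4 - 1)) = 0" using mv_zero_det v(1) by blast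
  then have "(k1 - 1) * (k4 - 1) - k2 * k3 = 0" by simp
  moreover have "k1 * k4 - k2 * k3 = 1" using dK K by simp
  ultimately show ?thesis using K by (simp add: algebra_simps)
qed

lemma trK_ident:
  fixes x1 x2 x3 x4 y1 y2 y3 y4 :: "'a::comm_ring_1"
  shows "m2tr (commK (M2 x1 x2 x3 x4) (M2 y1 y2 y3 y4)) - 2 * (x1*x4 - x2*x3) * (y1*y4 - y2*y3)
     = (x1*y1 + x2*y3 - (y1*x1 + y2*x3))^2 + (x1*y2 + x2*y4 - (y1*x2 + y2*x4)) * (x3*y1 + x4*y3 - (y3*x1 + y4*x3))"
  unfolding commK_def by (simp add: algebra_simps power2_eq_square)

lemma ident2:
  fixes x1 x2 x3 x4 y1 y2 y3 y4 :: "'a::comm_ring_1"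
  assumes m_def: "m = x1*y1 + x2*y3 - (y1*x1 + y2*x3)"
    and n_def: "n = x1*y2 + x2*y4 - (y1*x2 + y2*x4)"
    and r_def: "r = x3*y1 + x4*y3 - (y3*x1 + y4*x3)"
  shows "4 * x2^2 * (m^2 + n * r) = (2*x2*m - (x1 - x4)*n)^2 - ((x1 + x4)^2 - 4*(x1*x4 - x2*x3)) * n^2"
  unfolding m_def n_def r_def by (simp add: algebra_simps power2_eq_square)

lemma ellip_trK:
  fixes X Y :: "real m2"
  assumes dX: "m2det X = 1" and dY: "m2det Y = 1" and el: "(m2tr X)^2 < 4"
  shows "m2tr (commK X Y) \<ge> 2"
proof -
  obtain x1 x2 x3 x4 where X: "X = M2 x1 x2 x3 x4" by (cases X)
  obtain y1 y2 y3 y4 where Y: "Y = M2 y1 y2 y3 y4" by (cases Y)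
  define m where "m = x1*y1 + x2*y3 - (y1*x1 + y2*x3)"
  define n where "n = x1*y2 + x2*y4 - (y1*x2 + y2*x4)"
  define r where "r = x3*y1 + x4*y3 - (y3*x1 + y4*x3)"
  have d: "x1*x4 - x2*x3 = 1" "y1*y4 - y2*y3 = 1" using dX dY X Y by auto
  have a: "(x1 + x4)^2 < 4" using el X by simp
  have x2: "x2 \<noteq> 0"
  proof
    assume "x2 = 0"
    then have "(x1 + x4)^2 - 4 = (x1 - x4)^2" using d(1) by (simp add: algebra_simps power2_eq_square)
    then show False using a by (metis diff_less_0_iff_less not_less zero_le_power2)
  qed
  have e1: "m2tr (commK X Y) - 2 = m^2 + n*r"
    using trK_ident[of x1 x2 x3 x4 y1 y2 y3 y4] d unfolding X Y m_def n_def r_def by simp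
  have e2: "4 * x2^2 * (m^2 + n*r) = (2*x2*m - (x1 - x4)*n)^2 + (4 - (x1 + x4)^2) * n^2"
  proof -
    have i: "4 * x2^2 * (m^2 + n*r) = (2*x2*m - (x1 - x4)*n)^2 - ((x1 + x4)^2 - 4*(x1*x4 - x2*x3)) * n^2"
      by (rule ident2[OF m_def n_def r_def])
    show ?thesis unfolding i d(1) by (simp add: algebra_simps)
  qed
  have "0 \<le> (2*x2*m - (x1 - x4)*n)^2 + (4 - (x1 + x4)^2) * n^2" using a by (intro add_nonneg_nonneg) auto
  then have "0 \<le> 4 * x2^2 * (m^2 + n*r)" using e2 by simp
  moreover have "0 < 4 * x2^2" using x2 by simp
  ultimately have "0 \<le> m^2 + n*r" by (simp add: zero_le_mult_iff)
  then show ?thesis using e1 by simp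
qed


lemma tri_mul: "m2_c A = 0 \<Longrightarrow> m2_c B = 0 \<Longrightarrow> m2_c (m2mul A B) = 0 \<and> m2_a (m2mul A B) = m2_a A * m2_a B"
  by (cases A; cases B) simp

lemma tri_prodL: "(\<And>i. i \<in> set xs \<Longrightarrow> m2_c (f i) = 0) \<Longrightarrow>
   m2_c (prodL f xs) = 0 \<and> m2_a (prodL f xs) = prod_list (map (\<lambda>i. m2_a (f i)) xs)"
proof (induction xs)
  case Nil then show ?case by (simp add: m2id_def)
next
  case (Cons x xs) then show ?case by (simp add: prodL_Cons tri_mul)
qed

lemma tri_zpow:
  fixes X :: "'a::field m2"
  assumes "m2_c X = 0" "m2det X = 1"
  shows "m2_c (m2zpow X k) = 0 \<and> m2_a (m2zpow X k) = m2_a X powi k"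
proof -
  obtain a b d where X: "X = M2 a b 0 d" using assms(1) by (cases X) auto
  have ad: "a * d = 1" using assms(2) X by simp
  have di: "d = inverse a" using ad by (metis inverse_unique)
  show ?thesis
  proof (cases "0 \<le> k")
    case True
    then obtain m where k: "k = int m" by (metis nonneg_eq_int)
    obtain z where "m2pow (M2 a b 0 d) m = M2 (a^m) z 0 (d^m)" using m2pow_tri by blast
    then show ?thesis unfolding X m2zpow_def k by simp
  next
    case False
    then obtain m where k: "k = - int m" "m > 0" by (metis nle_le nonpos_int_cases neg_0_le_iff_le of_nat_0_less_iff neg_less_0_iff_less not_le)
    obtain z where "m2pow (M2 d (-b) 0 a) m = M2 (d^m) z 0 (a^m)" using m2pow_tri by blast
    then show ?thesis unfolding X m2zpow_def k using k(2) by (simp add: di powi_neg_nat)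
  qed
qed

lemma unip_zpow: "m2zpow (M2 1 x 0 1) k = M2 1 (of_int k * (x::'a::field)) 0 1"
proof (cases "0 \<le> k")
  case True
  then obtain m where k: "k = int m" by (metis nonneg_eq_int)
  show ?thesis unfolding m2zpow_def k using m2pow_tri_eq[of "1::'a" x m] by simp
next
  case False
  then obtain m where k: "k = - int m" by (metis nle_le nonpos_int_cases)
  show ?thesis using False unfolding m2zpow_def k using m2pow_tri_eq[of "1::'a" "-x" m] by simp
qed

lemma unip_prodL: "(\<And>i. i \<in> set xs \<Longrightarrow> f i = M2 1 (g i) 0 1) \<Longrightarrow>
   prodL f xs = M2 1 (sum_list (map g xs)) 0 (1::'a::field)"
proof (induction xs)
  case Nil then show ?case by (simp add: m2id_def)
next
  case (Cons x xs) then show ?case by (simp add: prodL_Cons algebra_simps)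
qed

lemma prod_list_powi: "(a::'a::field) \<noteq> 0 \<Longrightarrow> prod_list (map (\<lambda>i. a powi f i) xs) = a powi (sum_list (map f xs))"
  by (induction xs) (simp_all add: power_int_add)

lemma sigma_list: "sigma p q = sum_list (map (eps p q) [1..p-1])"
  unfolding sigma_def by (simp add: sum_set_upto_conv_sum_list_int[symmetric])

lemma sum_list_mult_x: "sum_list (map (\<lambda>i. of_int (f i) * (x::'a::field)) xs) = of_int (sum_list (map f xs)) * x"
  by (induction xs) (simp_all add: algebra_simps)

lemma tri_trivial:
  fixes a1 x d1 b1 y e1 :: "'a::field_char_0"
  assumes tb: "two_bridge p q" and n: "n = 1 \<or> n = -1"
    and X1: "X1 = M2 a1 x 0 d1" "a1 * d1 = 1" and Y1: "Y1 = M2 b1 y 0 e1" "b1 * e1 = 1"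
    and r1: "m2mul (wordW p q X1 Y1) X1 = m2mul Y1 (wordW p q X1 Y1)"
    and r2: "m2mul (m2mul (wordWrev p q X1 Y1) (wordW p q X1 Y1)) (m2zpow X1 (n - 2 * sigma p q)) = m2id"
  shows "X1 = m2id \<and> Y1 = m2id"
proof -
  define xs where "xs = [1..p-1]"
  define k where "k = n - 2 * sigma p q"
  have dX: "m2det X1 = 1" "m2_c X1 = 0" and dY: "m2det Y1 = 1" "m2_c Y1 = 0" using X1 Y1 by simp_all
  have a0: "a1 \<noteq> 0" "b1 \<noteq> 0" using X1(2) Y1(2) by auto
  have fac: "m2_c (wfactor p q A B i) = 0 \<and> m2_a (wfactor p q A B i) = (if odd i then m2_a A else m2_a B) powi eps p q i"
    if "m2det A = 1" "m2_c A = 0" "m2det B = 1" "m2_c B = 0" for A B :: "'a m2" and i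
    unfolding wfactor_def using tri_zpow that by auto
  have Wtri: "m2_c (wordW p q A B) = 0 \<and> m2_a (wordW p q A B) = prod_list (map (\<lambda>i. (if odd i then m2_a A else m2_a B) powi eps p q i) xs)"
    if "m2det A = 1" "m2_c A = 0" "m2det B = 1" "m2_c B = 0" for A B :: "'a m2"
    unfolding wordW_prodL xs_def[symmetric] using tri_prodL[of xs "wfactor p q A B"] fac[OF that] by simp
  obtain wa wb wd where W: "wordW p q X1 Y1 = M2 wa wb 0 wd"
    using Wtri[OF dX dY] by (cases "wordW p q X1 Y1") auto
  have aX: "m2_a X1 = a1" and aY: "m2_a Y1 = b1" using X1 Y1 by simp_all
  have wa: "wa = prod_list (map (\<lambda>i. (if odd i then a1 else b1) powi eps p q i) xs)"
    using Wtri[OF dX dY] W unfolding aX aY by simp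
  have "wa \<noteq> 0" unfolding wa using a0 by (auto simp: prod_list_zero_iff split: if_splits)
  moreover have "wa * a1 = b1 * wa" using r1 unfolding W unfolding X1 Y1 by simp
  ultimately have ab: "a1 = b1" by simp
  then have de: "d1 = e1" using X1(2) Y1(2) by (metis inverse_unique)
  have sig: "sum_list (map (eps p q) xs) = sigma p q" unfolding xs_def sigma_list ..
  have wa2: "wa = a1 powi sigma p q" unfolding wa ab using a0 prod_list_powi[of b1 "eps p q" xs] sig by simp
  have Wr: "wordWrev p q X1 Y1 = wordW p q Y1 X1" by (rule wordWrev_swap[OF tb])
  obtain ra rb rd where R: "wordW p q Y1 X1 = M2 ra rb 0 rd"
    using Wtri[OF dY dX] by (cases "wordW p q Y1 X1") auto
  have ra: "ra = a1 powi sigma p q"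
    using Wtri[OF dY dX] R a0 prod_list_powi[of b1 "eps p q" xs] sig unfolding aX aY ab by simp
  obtain za zb zd where Z: "m2zpow X1 k = M2 za zb 0 zd" using tri_zpow[OF dX(2) dX(1), of k] by (cases "m2zpow X1 k") auto
  have za: "za = a1 powi k" using tri_zpow[OF dX(2) dX(1), of k] Z X1 by simp
  have "ra * wa * za = 1" using r2 unfolding k_def[symmetric] Wr R W Z by (simp add: m2id_def)
  moreover have "a1 powi (sigma p q + sigma p q + k) = a1 powi sigma p q * a1 powi sigma p q * a1 powi k"
    using a0(1) by (metis power_int_add)
  ultimately have "a1 powi (sigma p q + sigma p q + k) = 1" unfolding ra wa2 za by simp
  then have "a1 powi n = 1" unfolding k_def by simp
  then have a1: "a1 = 1" using n by (auto simp: power_int_minus)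
  have d1: "d1 = 1" using X1(2) a1 by simp
  have xy: "X1 = M2 1 x 0 1" "Y1 = M2 1 y 0 1" using X1 Y1 a1 d1 ab de by auto
  have unW: "wordW p q A B = M2 1 (sum_list (map (\<lambda>i. of_int (eps p q i) * (if odd i then xa else ya)) xs)) 0 1"
    if "A = M2 1 xa 0 1" "B = M2 1 ya 0 1" for A B :: "'a m2" and xa ya
    unfolding wordW_prodL xs_def[symmetric]
    by (rule unip_prodL) (simp add: wfactor_def that unip_zpow)
  have "x = y" using r1 unfolding unW[OF xy] unfolding xy by simp
  then have X1Y1: "X1 = Y1" using xy by simp
  have WW: "wordW p q X1 X1 = M2 1 (of_int (sigma p q) * x) 0 1"
    unfolding unW[OF xy(1) xy(1)] using sum_list_mult_x[of "eps p q" x xs] sig by simp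
  have "M2 1 (of_int (sigma p q) * x + of_int (sigma p q) * x + of_int k * x) 0 1 = (m2id :: 'a m2)"
    using r2 unfolding k_def[symmetric] Wr unfolding X1Y1[symmetric] WW by (simp add: xy unip_zpow algebra_simps)
  then have "of_int (sigma p q + sigma p q + k) * x = 0" by (simp add: m2id_def algebra_simps)
  then have "of_int n * x = 0" unfolding k_def by simp
  then have "x = 0" using n by auto
  then show ?thesis using xy \<open>x = y\<close> by (simp add: m2id_def)
qed

lemma c_conj:
  fixes X :: "'a::field m2"
  assumes "mv X (v1, v2) = sv a (v1, v2)"
  shows "m2_c (m2mul (m2adj (M2 v1 w1 v2 w2)) (m2mul X (M2 v1 w1 v2 w2))) = 0"
proof -
  obtain x1 x2 x3 x4 where X: "X = M2 x1 x2 x3 x4" by (cases X)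
  have e: "x1*v1 + x2*v2 = a*v1" "x3*v1 + x4*v2 = a*v2" using assms X by (auto simp: sv_def)
  show ?thesis unfolding X using e by simp
qed

lemma conj_intw:
  fixes X H :: "'a::field m2"
  assumes "m2det H \<noteq> 0"
  shows "intw H (m2smul (inverse (m2det H)) (m2mul (m2adj H) (m2mul X H))) X"
proof -
  have "m2mul H (m2smul (inverse (m2det H)) (m2mul (m2adj H) (m2mul X H)))
      = m2smul (inverse (m2det H)) (m2mul (m2mul H (m2adj H)) (m2mul X H))"
    by (simp add: mul_smul_right m2mul_assoc)
  also have "\<dots> = m2mul X H" unfolding mul_adj_right smul_id_left
    using assms by (cases "m2mul X H") simp
  finally show ?thesis unfolding intw_def .
qed

lemma smul_c: "m2_c (m2smul k A) = k * m2_c A" by (cases A) simp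

lemma triangularize:
  fixes X Y :: "'a::field m2"
  assumes "comm_eig X Y"
  shows "\<exists>H X1 Y1. m2det H \<noteq> 0 \<and> intw H X1 X \<and> intw H Y1 Y \<and> m2_c X1 = 0 \<and> m2_c Y1 = 0"
proof -
  obtain v a b where v: "v \<noteq> (0,0)" "mv X v = sv a v" "mv Y v = sv b v" using assms unfolding comm_eig_def by blast
  obtain v1 v2 where vv: "v = (v1, v2)" by (cases v)
  obtain w1 w2 where dH: "m2det (M2 v1 w1 v2 w2) \<noteq> 0"
  proof (cases "v1 = 0")
    case True
    then have "v2 \<noteq> 0" using v(1) vv by auto
    then show ?thesis using that[of 1 0] True by simp
  next
    case False
    then show ?thesis using that[of 0 1] by simp
  qed
  define H where "H = M2 v1 w1 v2 w2"
  show ?thesis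
    apply (rule exI[of _ H])
    apply (rule exI[of _ "m2smul (inverse (m2det H)) (m2mul (m2adj H) (m2mul X H))"])
    apply (rule exI[of _ "m2smul (inverse (m2det H)) (m2mul (m2adj H) (m2mul Y H))"])
    using dH conj_intw[of H X] conj_intw[of H Y] c_conj[of X v1 v2 a w1 w2] c_conj[of Y v1 v2 b w1 w2] v vv
    unfolding H_def by (simp add: smul_c)
qed

lemma det_intw:
  fixes H :: "'a::field m2"
  assumes "m2det H \<noteq> 0" "intw H X1 X" shows "m2det X1 = m2det X"
proof -
  have "m2det (m2mul H X1) = m2det (m2mul X H)" using assms(2) unfolding intw_def by simp
  then show ?thesis using assms(1) by (simp add: det_mul)
qed

lemma comm_eig_trivial:
  fixes X Y :: "'a::field_char_0 m2"
  assumes tb: "two_bridge p q" and n: "n = 1 \<or> n = -1"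
    and dX: "m2det X = 1" and dY: "m2det Y = 1"
    and r1: "m2mul (wordW p q X Y) X = m2mul Y (wordW p q X Y)"
    and r2: "m2mul (m2mul (wordWrev p q X Y) (wordW p q X Y)) (m2zpow X (n - 2 * sigma p q)) = m2id"
    and ce: "comm_eig X Y"
  shows "X = m2id \<and> Y = m2id"
proof -
  obtain H X1 Y1 where H: "m2det H \<noteq> 0" "intw H X1 X" "intw H Y1 Y" "m2_c X1 = 0" "m2_c Y1 = 0"
    using triangularize[OF ce] by blast
  have tr: "m2tr X1 = m2tr X" "m2tr Y1 = m2tr Y" using intw_tr H by blast+
  have rr: "m2mul (wordW p q X1 Y1) X1 = m2mul Y1 (wordW p q X1 Y1)"
    "m2mul (m2mul (wordWrev p q X1 Y1) (wordW p q X1 Y1)) (m2zpow X1 (n - 2 * sigma p q)) = m2id"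
    using rel_transfer[OF H(1) H(2) H(3) tr, of p q "n - 2 * sigma p q"] r1 r2 by blast+
  have d1: "m2det X1 = 1" "m2det Y1 = 1" using det_intw H dX dY by metis+
  obtain a1 x d1 where X1: "X1 = M2 a1 x 0 d1" using H(4) by (cases X1) auto
  obtain b1 y e1 where Y1: "Y1 = M2 b1 y 0 e1" using H(5) by (cases Y1) auto
  have "X1 = m2id \<and> Y1 = m2id"
    by (rule tri_trivial[OF tb n X1 _ Y1 _ rr]) (use d1 X1 Y1 in simp_all)
  then have "m2mul m2id H = m2mul X H" "m2mul m2id H = m2mul Y H" using H(2,3) unfolding intw_def by simp_all
  then show ?thesis using cancel_right H(1) by metis
qed


lemma mapC_ent: "m2_a (mapC M) = of_real (m2_a M)" "m2_b (mapC M) = of_real (m2_b M)"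
  "m2_d (mapC M) = of_real (m2_d M)"
  by (cases M; simp)+

lemma pq_cx:
  "Apq p q (complex_of_real t) (complex_of_real u) = of_real (Apq p q t u)"
  "Bpq p q (complex_of_real t) (complex_of_real u) = of_real (Bpq p q t u)"
  "Dpq p q (complex_of_real t) (complex_of_real u) = of_real (Dpq p q t u)"
  unfolding Apq_def Bpq_def Dpq_def mapC_matC[symmetric] mapC_matD[symmetric] mapC_wordW[symmetric] mapC_ent by simp_all

lemma rel_cx:
  fixes X Y :: "real m2"
  shows "(m2mul (wordW p q X Y) X = m2mul Y (wordW p q X Y)) \<longleftrightarrow>
      (m2mul (wordW p q (mapC X) (mapC Y)) (mapC X) = m2mul (mapC Y) (wordW p q (mapC X) (mapC Y)))"
    and "(m2mul (m2mul (wordWrev p q X Y) (wordW p q X Y)) (m2zpow X k) = m2id) \<longleftrightarrow>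
      (m2mul (m2mul (wordWrev p q (mapC X) (mapC Y)) (wordW p q (mapC X) (mapC Y))) (m2zpow (mapC X) k) = m2id)"
  unfolding mapC_wordW[symmetric] mapC_wordWrev[symmetric] mapC_zpow[symmetric] mapC_mul[symmetric]
    mapC_id[symmetric]
  using mapC_inj by metis+

lemma dl_nz:
  fixes t :: "'a::field"
  assumes "t \<noteq> 0" "t \<noteq> 1" "t \<noteq> -1"
  shows "t - inverse t \<noteq> 0"
proof
  assume "t - inverse t = 0"
  then have "t * t = 1" using assms(1) by (simp add: field_simps)
  then have "(t - 1) * (t + 1) = 0" by (simp add: algebra_simps)
  then show False using assms(2,3) by (simp add: eq_neg_iff_add_eq_0)
qed

lemma suff_real:
  assumes tb: "two_bridge p q" and rs: "real_sol p q n"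
  shows "has_nontrivial_SL2R_rep p q n"
proof -
  obtain t u :: real where t: "t \<notin> {-1, 0, 1}" and e1: "Apq p q t u = (t - inverse t) * Bpq p q t u"
    and e2: "t powi (n - 2 * sigma p q) * ((t - inverse t)^2 - u) * (Bpq p q t u)^2 = 1"
    using rs unfolding real_sol_def by blast
  have t0: "t \<noteq> 0" and d0: "t - inverse t \<noteq> 0" using t dl_nz[of t] by auto
  have "surgery_rep p q n (matC t) (matD t u)"
    unfolding surgery_rep_def using det_C[OF t0] det_D[OF t0] rel1[OF tb] e1 suff_gen[OF tb t0 d0 e1 e2] by blast
  moreover have "matC t \<noteq> m2id" unfolding matC_def m2id_def by simp
  ultimately show ?thesis unfolding has_nontrivial_SL2R_rep_def by blast
qed

lemma suff_minus_one:
  assumes tb: "two_bridge p q" and ms: "minus_one_sol p q n"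
  shows "has_nontrivial_SL2R_rep p q n"
proof -
  obtain u :: real where n: "odd n" and e1: "Apq p q (-1) u = 0"
    and e2: "- of_int (n - 2 * sigma p q) * u * Bpq p q (-1) u = 2 * Dpq p q (-1) u"
    using ms unfolding minus_one_sol_def by blast
  have ko: "odd (n - 2 * sigma p q)" using n by simp
  have t0: "(-1::real) \<noteq> 0" by simp
  have e1': "Apq p q (-1) u = ((-1) - inverse (-1::real)) * Bpq p q (-1) u" using e1 by simp
  have "surgery_rep p q n (matC (-1)) (matD (-1) u)"
    unfolding surgery_rep_def using det_C[OF t0] det_D[OF t0] rel1[OF tb] e1' suff_m1[OF tb e1 ko e2] by blast
  moreover have "matC (-1::real) \<noteq> m2id" unfolding matC_def m2id_def by simp
  ultimately show ?thesis unfolding has_nontrivial_SL2R_rep_def by blast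
qed

lemma trK_rot:
  fixes c sn y2 y3 :: real
  assumes "c^2 + sn^2 = 1" "c^2 - y2*y3 = 1"
  shows "m2tr (commK (M2 c (-sn) sn c) (M2 c y2 y3 c)) = 2 + sn^2 * (y2 + y3)^2"
  using assms unfolding commK_def by simp algebra

lemma mapC_commK: "mapC (commK X Y) = commK (mapC X) (mapC Y)"
  unfolding commK_def by (simp add: mapC_mul mapC_adj)

lemma cis_sum: "cis a + cis (-a) = complex_of_real (2 * cos a)"
  by (simp add: complex_eq_iff)

lemma suff_circle:
  assumes tb: "two_bridge p q" and cs: "circle_sol p q n"
  shows "has_nontrivial_SL2R_rep p q n"
proof -
  define k where "k = n - 2 * sigma p q"
  obtain th u :: real where t1: "cis th \<noteq> 1" and t2: "cis th \<noteq> -1" and ur: "u < -4 * (sin th)^2 \<or> 0 < u"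
    and e1: "Apq p q (cis th) (of_real u) = (cis th - inverse (cis th)) * Bpq p q (cis th) (of_real u)"
    and e2: "cis th powi k * ((cis th - inverse (cis th))^2 - of_real u) * (Bpq p q (cis th) (of_real u))^2 = 1"
    using cs unfolding circle_sol_def Let_def k_def by blast
  define c where "c = cos th"
  define sn where "sn = sin th"
  have cs1: "c^2 + sn^2 = 1" unfolding c_def sn_def by simp
  have sn0: "sn \<noteq> 0"
  proof
    assume h: "sn = 0"
    then have "c^2 = 1" using cs1 by simp
    then have "c = 1 \<or> c = -1" by (simp add: power2_eq_1_iff)
    moreover have "cis th = complex_of_real c" using h unfolding c_def sn_def by (simp add: complex_eq_iff)
    ultimately show False using t1 t2 by auto
  qed
  define D0 where "D0 = -2*sn - u/sn"
  define disc where "disc = D0^2 - 4*sn^2"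
  have disc_eq: "disc = u*(u + 4*sn^2)/sn^2" unfolding disc_def D0_def using sn0
    by (simp add: field_simps power2_eq_square)
  have "u*(u + 4*sn^2) > 0"
  proof (cases "0 < u")
    case True then show ?thesis by (simp add: add_pos_nonneg)
  next
    case False
    then have "u < -4 * sn^2" using ur unfolding sn_def by simp
    moreover have "0 \<le> sn^2" by simp
    ultimately have "u < 0" "u + 4*sn^2 < 0" by linarith+
    then show ?thesis by (simp add: mult_neg_neg)
  qed
  then have dpos: "disc > 0" unfolding disc_eq using sn0 by simp
  define R where "R = sqrt disc"
  have R2: "R^2 = disc" unfolding R_def using dpos by simp
  define y2 where "y2 = (D0 + R)/2"
  define y3 where "y3 = (R - D0)/2"
  have yy: "y2 * y3 = -(sn^2)" unfolding y2_def y3_def using R2 unfolding disc_def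
    by (simp add: field_simps power2_eq_square)
  define X where "X = M2 c (-sn) sn c"
  define Y where "Y = M2 c y2 y3 c"
  have dX: "m2det X = 1" unfolding X_def using cs1 by (simp add: power2_eq_square)
  have dY: "m2det Y = 1" unfolding Y_def using cs1 yy by (simp add: power2_eq_square)
  have trXY: "m2tr (m2mul X Y) = 2*c^2 - 2*sn^2 - u"
  proof -
    have "m2tr (m2mul X Y) = 2*c^2 + sn*(y2 - y3)" unfolding X_def Y_def by (simp add: algebra_simps power2_eq_square)
    moreover have "y2 - y3 = D0" unfolding y2_def y3_def by (simp add: field_simps)
    moreover have "sn * D0 = -2*sn^2 - u" unfolding D0_def using sn0 by (simp add: field_simps power2_eq_square)
    ultimately show ?thesis by simp
  qed
  have yy2: "c^2 - y2*y3 = 1" using yy cs1 by simp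
  have ysum: "y2 + y3 = R" unfolding y2_def y3_def by (simp add: field_simps)
  have trK: "m2tr (commK X Y) \<noteq> 2"
    unfolding X_def Y_def trK_rot[OF cs1 yy2] ysum R2 using sn0 dpos by simp
  define t where "t = cis th"
  define s where "s = cis (- th)"
  have ts: "t * s = 1" unfolding t_def s_def by (simp add: cis_mult)
  have sinv: "inverse t = s" unfolding t_def s_def by simp
  have tsum: "t + s = complex_of_real (2 * c)" unfolding t_def s_def c_def by (rule cis_sum)
  have trX: "m2tr (mapC X) = t + s" "m2tr (mapC Y) = t + s" unfolding tsum X_def Y_def by simp_all
  have dXc: "m2det (mapC X) = 1" "m2det (mapC Y) = 1" using dX dY by (simp_all add: mapC_det)
  have nce: "\<not> comm_eig (mapC X) (mapC Y)"
  proof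
    assume "comm_eig (mapC X) (mapC Y)"
    then have "m2tr (commK (mapC X) (mapC Y)) = 2" using comm_eig_trK dXc by blast
    then have "complex_of_real (m2tr (commK X Y)) = 2" unfolding mapC_commK[symmetric] mapC_tr .
    then show False using trK by (metis of_real_numeral of_real_eq_iff)
  qed
  obtain H where H: "m2det H \<noteq> 0" "intw H (matC t) (mapC X)"
    "intw H (matD t (t^2 + s^2 - m2tr (m2mul (mapC X) (mapC Y)))) (mapC Y)"
    using normal_form[OF dXc trX ts nce] by blast
  have "t^2 + s^2 = (t + s)^2 - 2 * (t * s)" by (simp add: power2_eq_square algebra_simps)
  also have "\<dots> = complex_of_real (4 * c^2 - 2)" unfolding tsum ts by (simp add: power2_eq_square)
  finally have "t^2 + s^2 - m2tr (m2mul (mapC X) (mapC Y)) = complex_of_real (4*c^2 - 2 - (2*c^2 - 2*sn^2 - u))"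
    unfolding mapC_mul[symmetric] mapC_tr trXY by simp
  also have "4*c^2 - 2 - (2*c^2 - 2*sn^2 - u) = u" using cs1 by simp
  finally have uu: "t^2 + s^2 - m2tr (m2mul (mapC X) (mapC Y)) = complex_of_real u" .
  have iD: "intw H (matD t (complex_of_real u)) (mapC Y)" using H(3) unfolding uu .
  have trC: "m2tr (matC t) = m2tr (mapC X)" "m2tr (matD t (complex_of_real u)) = m2tr (mapC Y)"
    unfolding trX matC_def matD_def sinv by simp_all
  have t0: "t \<noteq> 0" unfolding t_def by simp
  have d0: "t - inverse t \<noteq> 0" using dl_nz[OF t0] t1 t2 unfolding t_def by blast
  have e1': "Apq p q t (complex_of_real u) = (t - inverse t) * Bpq p q t (complex_of_real u)" using e1 unfolding t_def .
  have e2': "t powi k * ((t - inverse t)^2 - complex_of_real u) * (Bpq p q t (complex_of_real u))^2 = 1" using e2 unfolding t_def .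
  have r1: "m2mul (wordW p q (matC t) (matD t (complex_of_real u))) (matC t) = m2mul (matD t (complex_of_real u)) (wordW p q (matC t) (matD t (complex_of_real u)))"
    using rel1[OF tb] e1' by blast
  have r2: "m2mul (m2mul (wordWrev p q (matC t) (matD t (complex_of_real u))) (wordW p q (matC t) (matD t (complex_of_real u)))) (m2zpow (matC t) k) = m2id"
    by (rule suff_gen[OF tb t0 d0 e1' e2'])
  have rX: "m2mul (wordW p q X Y) X = m2mul Y (wordW p q X Y)"
    "m2mul (m2mul (wordWrev p q X Y) (wordW p q X Y)) (m2zpow X k) = m2id"
    using rel_transfer[OF H(1) H(2) iD trC, where p=p and q=q and k=k] r1 r2 rel_cx(1)[where p=p and q=q and X=X and Y=Y] rel_cx(2)[where p=p and q=q and X=X and Y=Y and k=k] by blast+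
  have "surgery_rep p q n X Y" unfolding surgery_rep_def using dX dY rX unfolding k_def by blast
  moreover have "X \<noteq> m2id" unfolding X_def m2id_def using sn0 by simp
  ultimately show ?thesis unfolding has_nontrivial_SL2R_rep_def by blast
qed


lemma nec_core:
  fixes X Y :: "real m2" and t s :: complex
  assumes tb: "two_bridge p q" and dX: "m2det X = 1" and dY: "m2det Y = 1"
    and r1: "m2mul (wordW p q X Y) X = m2mul Y (wordW p q X Y)"
    and r2: "m2mul (m2mul (wordWrev p q X Y) (wordW p q X Y)) (m2zpow X k) = m2id"
    and nce: "\<not> comm_eig (mapC X) (mapC Y)"
    and tX: "m2tr X = tau" and tY: "m2tr Y = tau"
    and ts: "t * s = 1" and tsum: "t + s = complex_of_real tau"
  shows "m2mul (wordW p q (matC t) (matD t (complex_of_real (tau^2 - 2 - m2tr (m2mul X Y))))) (matC t)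
          = m2mul (matD t (complex_of_real (tau^2 - 2 - m2tr (m2mul X Y)))) (wordW p q (matC t) (matD t (complex_of_real (tau^2 - 2 - m2tr (m2mul X Y)))))
    \<and> m2mul (m2mul (wordWrev p q (matC t) (matD t (complex_of_real (tau^2 - 2 - m2tr (m2mul X Y))))) (wordW p q (matC t) (matD t (complex_of_real (tau^2 - 2 - m2tr (m2mul X Y)))))) (m2zpow (matC t) k) = m2id
    \<and> tau^2 - 2 - m2tr (m2mul X Y) \<noteq> 0
    \<and> (t - inverse t)^2 - complex_of_real (tau^2 - 2 - m2tr (m2mul X Y)) \<noteq> 0
    \<and> (\<exists>H. m2det H \<noteq> 0 \<and> intw H (matC t) (mapC X) \<and> intw H (matD t (complex_of_real (tau^2 - 2 - m2tr (m2mul X Y)))) (mapC Y))"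
proof -
  define u0 where "u0 = tau^2 - 2 - m2tr (m2mul X Y)"
  define u where "u = complex_of_real u0"
  have dXc: "m2det (mapC X) = 1" "m2det (mapC Y) = 1" using dX dY by (simp_all add: mapC_det)
  have trXc: "m2tr (mapC X) = t + s" "m2tr (mapC Y) = t + s" unfolding tsum mapC_tr tX tY by simp_all
  obtain H where H: "m2det H \<noteq> 0" "intw H (matC t) (mapC X)"
    "intw H (matD t (t^2 + s^2 - m2tr (m2mul (mapC X) (mapC Y)))) (mapC Y)"
    "t^2 + s^2 - m2tr (m2mul (mapC X) (mapC Y)) \<noteq> 0"
    using normal_form[OF dXc trXc ts nce] by blast
  have "t^2 + s^2 = (t + s)^2 - 2 * (t * s)" by (simp add: power2_eq_square algebra_simps)
  then have uu: "t^2 + s^2 - m2tr (m2mul (mapC X) (mapC Y)) = u"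
    unfolding u_def u0_def tsum ts mapC_mul[symmetric] mapC_tr by simp
  have sinv: "inverse t = s" by (rule inverse_unique[OF ts])
  have t0: "t \<noteq> 0" using ts by auto
  have iC: "intw H (matC t) (mapC X)" and iD: "intw H (matD t u) (mapC Y)" using H(2,3) unfolding uu by simp_all
  have trC: "m2tr (matC t) = m2tr (mapC X)" "m2tr (matD t u) = m2tr (mapC Y)"
    unfolding trXc matC_def matD_def sinv by simp_all
  have rc: "m2mul (wordW p q (mapC X) (mapC Y)) (mapC X) = m2mul (mapC Y) (wordW p q (mapC X) (mapC Y))"
    "m2mul (m2mul (wordWrev p q (mapC X) (mapC Y)) (wordW p q (mapC X) (mapC Y))) (m2zpow (mapC X) k) = m2id"
    using r1 r2 rel_cx(1)[where p=p and q=q and X=X and Y=Y] rel_cx(2)[where p=p and q=q and X=X and Y=Y and k=k] by blast+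
  have rr: "m2mul (wordW p q (matC t) (matD t u)) (matC t) = m2mul (matD t u) (wordW p q (matC t) (matD t u))"
    "m2mul (m2mul (wordWrev p q (matC t) (matD t u)) (wordW p q (matC t) (matD t u))) (m2zpow (matC t) k) = m2id"
    using rel_transfer[OF H(1) iC iD trC, where p=p and q=q and k=k] rc by blast+
  have u0nz: "u0 \<noteq> 0" using H(4) unfolding uu u_def by simp
  have knz: "(t - inverse t)^2 - u \<noteq> 0"
  proof
    assume "(t - inverse t)^2 - u = 0"
    then have "comm_eig (matC t) (matD t u)" using comm_eig_CD[OF t0] by blast
    then have "comm_eig (mapC X) (mapC Y)" using comm_eig_transfer[OF H(1) iC iD] by blast
    then show False using nce by blast
  qed
  show ?thesis using rr u0nz knz H(1) iC iD unfolding u_def u0_def by blast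
qed

lemma necessity:
  assumes tb: "two_bridge p q" and n: "n = 1 \<or> n = -1" and hr: "has_nontrivial_SL2R_rep p q n"
  shows "real_sol p q n \<or> circle_sol p q n \<or> minus_one_sol p q n"
proof -
  define k where "k = n - 2 * sigma p q"
  obtain X Y :: "real m2" where dX: "m2det X = 1" and dY: "m2det Y = 1"
    and r1: "m2mul (wordW p q X Y) X = m2mul Y (wordW p q X Y)"
    and r2: "m2mul (m2mul (wordWrev p q X Y) (wordW p q X Y)) (m2zpow X k) = m2id"
    and nt: "X \<noteq> m2id \<or> Y \<noteq> m2id"
    using hr unfolding has_nontrivial_SL2R_rep_def surgery_rep_def k_def by blast
  have nce: "\<not> comm_eig (mapC X) (mapC Y)"
  proof
    assume ce: "comm_eig (mapC X) (mapC Y)"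
    have dXc: "m2det (mapC X) = 1" "m2det (mapC Y) = 1" using dX dY by (simp_all add: mapC_det)
    have rc: "m2mul (wordW p q (mapC X) (mapC Y)) (mapC X) = m2mul (mapC Y) (wordW p q (mapC X) (mapC Y))"
      "m2mul (m2mul (wordWrev p q (mapC X) (mapC Y)) (wordW p q (mapC X) (mapC Y))) (m2zpow (mapC X) (n - 2 * sigma p q)) = m2id"
      using r1 r2 rel_cx(1)[where p=p and q=q and X=X and Y=Y] rel_cx(2)[where p=p and q=q and X=X and Y=Y and k=k]
      unfolding k_def by blast+
    have "mapC X = m2id \<and> mapC Y = m2id" by (rule comm_eig_trivial[OF tb n dXc rc ce])
    then have "X = m2id \<and> Y = m2id" using mapC_inj mapC_id by metis
    then show False using nt by blast
  qed
  define tau where "tau = m2tr X"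
  have tX: "m2tr X = tau" unfolding tau_def ..
  have tY: "m2tr Y = tau"
  proof -
    have "m2det (wordW p q X Y) = 1" using det_wordW dX dY by blast
    then have "m2tr X = m2tr Y" using intw_tr[of "wordW p q X Y" X Y] r1 unfolding intw_def by simp
    then show ?thesis unfolding tau_def by simp
  qed
  define u0 where "u0 = tau^2 - 2 - m2tr (m2mul X Y)"
  note core = nec_core[OF tb dX dY r1 r2 nce tX tY, folded u0_def]
  consider (hyp) "tau^2 > 4" | (ell) "tau^2 < 4" | (par) "tau^2 = 4" by linarith
  then show ?thesis
  proof cases
    case hyp
    define r where "r = sqrt (tau^2 - 4)"
    have r2': "r^2 = tau^2 - 4" unfolding r_def using hyp by simp
    define t0 where "t0 = (tau + r)/2"
    define s0 where "s0 = (tau - r)/2"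
    have ts0: "t0 * s0 = 1" unfolding t0_def s0_def using r2' by (simp add: field_simps power2_eq_square)
    have tsum0: "t0 + s0 = tau" unfolding t0_def s0_def by (simp add: field_simps)
    have ts: "complex_of_real t0 * complex_of_real s0 = 1" using ts0 by (metis of_real_mult of_real_1)
    have tsum: "complex_of_real t0 + complex_of_real s0 = complex_of_real tau" using tsum0 by (metis of_real_add)
    obtain rr1 rr2 kz where
      rr1: "m2mul (wordW p q (matC (complex_of_real t0)) (matD (complex_of_real t0) (complex_of_real u0))) (matC (complex_of_real t0))
          = m2mul (matD (complex_of_real t0) (complex_of_real u0)) (wordW p q (matC (complex_of_real t0)) (matD (complex_of_real t0) (complex_of_real u0)))"
      and rr2: "m2mul (m2mul (wordWrev p q (matC (complex_of_real t0)) (matD (complex_of_real t0) (complex_of_real u0))) (wordW p q (matC (complex_of_real t0)) (matD (complex_of_real t0) (complex_of_real u0)))) (m2zpow (matC (complex_of_real t0)) k) = m2id"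
      and kz: "(complex_of_real t0 - inverse (complex_of_real t0))^2 - complex_of_real u0 \<noteq> 0"
      using core[OF ts tsum] by blast
    have t00: "t0 \<noteq> 0" using ts0 by auto
    have t0c: "complex_of_real t0 \<noteq> 0" using t00 by simp
    have e1c: "Apq p q (complex_of_real t0) (complex_of_real u0) = (complex_of_real t0 - inverse (complex_of_real t0)) * Bpq p q (complex_of_real t0) (complex_of_real u0)"
      using rel1[OF tb] rr1 by blast
    have e2c: "complex_of_real t0 powi k * ((complex_of_real t0 - inverse (complex_of_real t0))^2 - complex_of_real u0) * (Bpq p q (complex_of_real t0) (complex_of_real u0))^2 = 1"
      by (rule nec_gen[OF tb t0c e1c kz rr2])
    have e1: "Apq p q t0 u0 = (t0 - inverse t0) * Bpq p q t0 u0"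
      using e1c unfolding pq_cx by (metis of_real_diff of_real_inverse of_real_mult of_real_eq_iff)
    have "complex_of_real (t0 powi k * ((t0 - inverse t0)^2 - u0) * (Bpq p q t0 u0)^2) = 1"
      using e2c unfolding pq_cx by simp
    then have e2: "t0 powi k * ((t0 - inverse t0)^2 - u0) * (Bpq p q t0 u0)^2 = 1"
      by (metis of_real_eq_1_iff)
    have "t0 \<noteq> 1" "t0 \<noteq> -1"
    proof -
      show "t0 \<noteq> 1" proof assume "t0 = 1" then have "s0 = 1" using ts0 by simp
        then show False using tsum0 hyp \<open>t0 = 1\<close> by simp qed
      show "t0 \<noteq> -1" proof assume "t0 = -1" then have "s0 = -1" using ts0 by (simp add: minus_equation_iff)
        then show False using tsum0 hyp \<open>t0 = -1\<close> by simp qed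
    qed
    then have "t0 \<notin> {-1, 0, 1}" using t00 by auto
    then have "real_sol p q n" unfolding real_sol_def using e1 e2 unfolding k_def by blast
    then show ?thesis by blast
  next
    case ell
    have tb1: "-1 < tau/2" "tau/2 < 1"
    proof -
      have "\<bar>tau\<bar> < 2"
      proof (rule ccontr)
        assume "\<not> \<bar>tau\<bar> < 2"
        then have "2 \<le> \<bar>tau\<bar>" by simp
        then have "2 * 2 \<le> \<bar>tau\<bar> * \<bar>tau\<bar>" by (intro mult_mono) auto
        then show False using ell by (simp add: power2_eq_square)
      qed
      then show "-1 < tau/2" "tau/2 < 1" by auto
    qed
    define th where "th = arccos (tau/2)"
    have cth: "cos th = tau/2" unfolding th_def using tb1 by simp
    have sth: "sin th \<noteq> 0" unfolding th_def using tb1 by (rule sin_arccos_nonzero)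
    define t where "t = cis th"
    define s where "s = cis (-th)"
    have ts: "t * s = 1" unfolding t_def s_def by (simp add: cis_mult)
    have tsum: "t + s = complex_of_real tau" unfolding t_def s_def cis_sum cth by simp
    have sinv: "inverse t = s" unfolding t_def s_def by simp
    obtain H where
      rr1: "m2mul (wordW p q (matC t) (matD t (complex_of_real u0))) (matC t)
          = m2mul (matD t (complex_of_real u0)) (wordW p q (matC t) (matD t (complex_of_real u0)))"
      and rr2: "m2mul (m2mul (wordWrev p q (matC t) (matD t (complex_of_real u0))) (wordW p q (matC t) (matD t (complex_of_real u0)))) (m2zpow (matC t) k) = m2id"
      and u0nz: "u0 \<noteq> 0"
      and kz: "(t - inverse t)^2 - complex_of_real u0 \<noteq> 0"
      and H: "m2det H \<noteq> 0" "intw H (matC t) (mapC X)" "intw H (matD t (complex_of_real u0)) (mapC Y)"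
      using core[OF ts tsum] by blast
    have t0: "t \<noteq> 0" unfolding t_def by simp
    have e1c: "Apq p q t (complex_of_real u0) = (t - inverse t) * Bpq p q t (complex_of_real u0)"
      using rel1[OF tb] rr1 by blast
    have e2c: "t powi k * ((t - inverse t)^2 - complex_of_real u0) * (Bpq p q t (complex_of_real u0))^2 = 1"
      by (rule nec_gen[OF tb t0 e1c kz rr2])
    have t1: "t \<noteq> 1" "t \<noteq> -1" using sth unfolding t_def by (auto simp: complex_eq_iff)
    have dl2: "(t - inverse t)^2 = complex_of_real (- 4 * (sin th)^2)"
      unfolding sinv t_def s_def by (simp add: complex_eq_iff power2_eq_square)
    have trC: "m2tr (matC t) = m2tr (mapC X)" "m2tr (matD t (complex_of_real u0)) = m2tr (mapC Y)"
      unfolding mapC_tr tX tY tsum[symmetric] matC_def matD_def sinv by simp_all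
    have "m2tr (commK (matC t) (matD t (complex_of_real u0))) = m2tr (commK (mapC X) (mapC Y))"
      using intw_tr[OF H(1) intw_commK[OF H(2) H(3) trC]] .
    then have "2 + complex_of_real u0 * (complex_of_real u0 - complex_of_real (- 4 * (sin th)^2)) = complex_of_real (m2tr (commK X Y))"
      unfolding tr_commK_CD[OF t0] dl2 mapC_commK[symmetric] mapC_tr .
    moreover have "2 + complex_of_real u0 * (complex_of_real u0 - complex_of_real (- 4 * (sin th)^2))
       = complex_of_real (2 + u0 * (u0 + 4 * (sin th)^2))" by simp
    ultimately have trK: "m2tr (commK X Y) = 2 + u0 * (u0 + 4 * (sin th)^2)"
      using of_real_eq_iff by metis
    have "(m2tr X)^2 < 4" using ell tX by simp
    then have "m2tr (commK X Y) \<ge> 2" using ellip_trK dX dY by blast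
    then have pos: "u0 * (u0 + 4 * (sin th)^2) \<ge> 0" using trK by simp
    have "complex_of_real (- 4 * (sin th)^2 - u0) \<noteq> 0" using kz unfolding dl2 by simp
    then have "- 4 * (sin th)^2 - u0 \<noteq> 0" by (metis of_real_0)
    then have nz2: "u0 + 4 * (sin th)^2 \<noteq> 0" by linarith
    have range: "u0 < -4 * (sin th)^2 \<or> 0 < u0"
    proof (cases "0 < u0")
      case False
      then have "u0 < 0" using u0nz by simp
      then have "u0 + 4 * (sin th)^2 \<le> 0" using pos by (simp add: zero_le_mult_iff)
      then show ?thesis using nz2 by simp
    qed simp
    have "circle_sol p q n" unfolding circle_sol_def Let_def
      using t1 range e1c e2c unfolding t_def k_def by blast
    then show ?thesis by blast
  next
    case par
    then have "(tau - 2) * (tau + 2) = 0" by (simp add: algebra_simps power2_eq_square)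
    then have "tau = 2 \<or> tau = -2" by (auto simp: eq_neg_iff_add_eq_0)
    then show ?thesis
    proof
      assume tau2: "tau = 2"
      have ts: "(1::complex) * 1 = 1" by simp
      have tsum: "(1::complex) + 1 = complex_of_real tau" unfolding tau2 by simp
      obtain rr1 rr2 where
        rr1: "m2mul (wordW p q (matC 1) (matD 1 (complex_of_real u0))) (matC 1)
          = m2mul (matD 1 (complex_of_real u0)) (wordW p q (matC 1) (matD 1 (complex_of_real u0)))"
        and rr2: "m2mul (m2mul (wordWrev p q (matC 1) (matD 1 (complex_of_real u0))) (wordW p q (matC 1) (matD 1 (complex_of_real u0)))) (m2zpow (matC (1::complex)) k) = m2id"
        using core[OF ts tsum] by blast
      have "Apq p q (1::complex) (complex_of_real u0) = (1 - inverse 1) * Bpq p q (1::complex) (complex_of_real u0)"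
        using rel1[OF tb] rr1 by blast
      then have "Apq p q (1::complex) (complex_of_real u0) = 0" by simp
      then show ?thesis using nec_p1[OF tb _ rr2] by blast
    next
      assume tau2: "tau = -2"
      have ts: "(-1::complex) * (-1) = 1" by simp
      have tsum: "(-1::complex) + (-1) = complex_of_real tau" unfolding tau2 by simp
      obtain rr1 rr2 where
        rr1: "m2mul (wordW p q (matC (-1)) (matD (-1) (complex_of_real u0))) (matC (-1))
          = m2mul (matD (-1) (complex_of_real u0)) (wordW p q (matC (-1)) (matD (-1) (complex_of_real u0)))"
        and rr2: "m2mul (m2mul (wordWrev p q (matC (-1)) (matD (-1) (complex_of_real u0))) (wordW p q (matC (-1)) (matD (-1) (complex_of_real u0)))) (m2zpow (matC (-1::complex)) k) = m2id"
        using core[OF ts tsum] by blast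
      have pqm: "Apq p q (-1) (complex_of_real u0) = of_real (Apq p q (-1) u0)"
        "Bpq p q (-1) (complex_of_real u0) = of_real (Bpq p q (-1) u0)"
        "Dpq p q (-1) (complex_of_real u0) = of_real (Dpq p q (-1) u0)"
        using pq_cx[of p q "-1" u0] by simp_all
      have "Apq p q (-1::complex) (complex_of_real u0) = (-1 - inverse (-1)) * Bpq p q (-1::complex) (complex_of_real u0)"
        using rel1[OF tb] rr1 by blast
      then have a0: "Apq p q (-1::complex) (complex_of_real u0) = 0" by simp
      then have a0r: "Apq p q (-1) u0 = 0" unfolding pqm by simp
      have "odd k \<and> - of_int k * complex_of_real u0 * Bpq p q (-1) (complex_of_real u0) = 2 * Dpq p q (-1) (complex_of_real u0)"
        by (rule nec_m1[OF tb a0 rr2])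
      then have ko: "odd k" and "complex_of_real (- of_int k * u0 * Bpq p q (-1) u0) = complex_of_real (2 * Dpq p q (-1) u0)"
        unfolding pqm by simp_all
      then have e2: "- of_int k * u0 * Bpq p q (-1) u0 = 2 * Dpq p q (-1) u0" by (metis of_real_eq_iff)
      have "odd n" using ko unfolding k_def by simp
      then have "minus_one_sol p q n" unfolding minus_one_sol_def using a0r e2 unfolding k_def by blast
      then show ?thesis by blast
    qed
  qed
qed


theorem mainTheorem3:
  fixes p q n :: int
  assumes "two_bridge p q"
  shows "(real_sol p q n \<or> circle_sol p q n \<or> minus_one_sol p q n
            \<longrightarrow> has_nontrivial_SL2R_rep p q n)
       \<and> ((n = 1 \<or> n = -1) \<longrightarrow>
            (has_nontrivial_SL2R_rep p q n \<longleftrightarrow>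
               (real_sol p q n \<or> circle_sol p q n \<or> minus_one_sol p q n)))"
    using suff_real[OF assms] suff_circle[OF assms] suff_minus_one[OF assms] necessity[OF assms] by blast

end
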